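(* Let $X$ be a finite connected poset and $K$ a field. If all maximal chains of $X$ lie in a single equivalence class of the relation $\sim$ (i.e. $|\mathcal{C}(X)/{\sim}|=1$), then every Lie automorphism of the incidence algebra $I(X,K)$ is proper.
   Context: $X$ is connected if for any $x,y\in X$ there is a sequence $x=x_0,\dots,x_m=y$ in which consecutive elements are comparable. $\mathrm{Min}(X)$ and $\mathrm{Max}(X)$ denote the sets of minimal and maximal elements of $X$. $\mathcal{C}(X)$ is the set of maximal chains of $X$ (chains maximal under inclusion). Two maximal chains $C,D$ are called linked if there is $x\in C\cap D$ with $x\notin \mathrm{Min}(X)\cup\mathrm{Max}(X)$; $\sim$ is the equivalence relation on $\mathcal{C}(X)$ generated by the linked pairs. The incidence algebra $I(X,K)$ is the $K$-vector space of functions $f:X\times X\to K$ with $f(x,y)=0$ unless $x\le y$, with product $(fg)(x,y)=\sum_{x\le z\le y}f(x,z)g(z,y)$. A Lie automorphism of $I(X,K)$ is a $K$-linear bijection $\varphi$ with $\varphi(ab-ba)=\varphi(a)\varphi(b)-\varphi(b)\varphi(a)$ for all $a,b$. It is proper if $\varphi=\phi+\nu$, where $\phi$ is either an algebra automorphism of $I(X,K)$ or the negative of an algebra anti-automorphism of $I(X,K)$, and $\nu$ is a linear map from $I(X,K)$ to the center of $I(X,K)$ vanishing on all commutators $ab-ba$. *)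

theory Defs
  imports Main
begin

text \<open>The finite poset X is the universe of a type of class finite and order.
  Elements of the incidence algebra are functions f :: X => X => K vanishing off the order.\<close>

definition incidence :: "('a::order \<Rightarrow> 'a \<Rightarrow> 'k::field) set" where
  "incidence = {f. \<forall>x y. \<not> x \<le> y \<longrightarrow> f x y = 0}"

definition inc_mult :: "('a::order \<Rightarrow> 'a \<Rightarrow> 'k::field) \<Rightarrow> ('a \<Rightarrow> 'a \<Rightarrow> 'k) \<Rightarrow> ('a \<Rightarrow> 'a \<Rightarrow> 'k)" where
  "inc_mult f g = (\<lambda>x y. if x \<le> y then (\<Sum>z\<in>{z. x \<le> z \<and> z \<le> y}. f x z * g z y) else 0)"

definition inc_comm :: "('a::order \<Rightarrow> 'a \<Rightarrow> 'k::field) \<Rightarrow> ('a \<Rightarrow> 'a \<Rightarrow> 'k) \<Rightarrow> ('a \<Rightarrow> 'a \<Rightarrow> 'k)" where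
  "inc_comm f g = (\<lambda>x y. inc_mult f g x y - inc_mult g f x y)"

definition inc_center :: "('a::order \<Rightarrow> 'a \<Rightarrow> 'k::field) set" where
  "inc_center = {f \<in> incidence. \<forall>g \<in> incidence. inc_mult f g = inc_mult g f}"

definition inc_linear :: "(('a::order \<Rightarrow> 'a \<Rightarrow> 'k::field) \<Rightarrow> ('a \<Rightarrow> 'a \<Rightarrow> 'k)) \<Rightarrow> bool" where
  "inc_linear \<phi> \<longleftrightarrow>
     (\<forall>f \<in> incidence. \<forall>g \<in> incidence. \<phi> (\<lambda>x y. f x y + g x y) = (\<lambda>x y. \<phi> f x y + \<phi> g x y)) \<and>
     (\<forall>c. \<forall>f \<in> incidence. \<phi> (\<lambda>x y. c * f x y) = (\<lambda>x y. c * \<phi> f x y))"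

definition inc_lin_bij :: "(('a::order \<Rightarrow> 'a \<Rightarrow> 'k::field) \<Rightarrow> ('a \<Rightarrow> 'a \<Rightarrow> 'k)) \<Rightarrow> bool" where
  "inc_lin_bij \<phi> \<longleftrightarrow> inc_linear \<phi> \<and> bij_betw \<phi> incidence incidence"

definition lie_automorphism :: "(('a::order \<Rightarrow> 'a \<Rightarrow> 'k::field) \<Rightarrow> ('a \<Rightarrow> 'a \<Rightarrow> 'k)) \<Rightarrow> bool" where
  "lie_automorphism \<phi> \<longleftrightarrow> inc_lin_bij \<phi> \<and>
     (\<forall>f \<in> incidence. \<forall>g \<in> incidence. \<phi> (inc_comm f g) = inc_comm (\<phi> f) (\<phi> g))"

definition alg_automorphism :: "(('a::order \<Rightarrow> 'a \<Rightarrow> 'k::field) \<Rightarrow> ('a \<Rightarrow> 'a \<Rightarrow> 'k)) \<Rightarrow> bool" where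
  "alg_automorphism \<phi> \<longleftrightarrow> inc_lin_bij \<phi> \<and>
     (\<forall>f \<in> incidence. \<forall>g \<in> incidence. \<phi> (inc_mult f g) = inc_mult (\<phi> f) (\<phi> g))"

definition alg_anti_automorphism :: "(('a::order \<Rightarrow> 'a \<Rightarrow> 'k::field) \<Rightarrow> ('a \<Rightarrow> 'a \<Rightarrow> 'k)) \<Rightarrow> bool" where
  "alg_anti_automorphism \<phi> \<longleftrightarrow> inc_lin_bij \<phi> \<and>
     (\<forall>f \<in> incidence. \<forall>g \<in> incidence. \<phi> (inc_mult f g) = inc_mult (\<phi> g) (\<phi> f))"

definition central_trace :: "(('a::order \<Rightarrow> 'a \<Rightarrow> 'k::field) \<Rightarrow> ('a \<Rightarrow> 'a \<Rightarrow> 'k)) \<Rightarrow> bool" where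
  "central_trace \<nu> \<longleftrightarrow> inc_linear \<nu> \<and> \<nu> ` incidence \<subseteq> inc_center \<and>
     (\<forall>f \<in> incidence. \<forall>g \<in> incidence. \<nu> (inc_comm f g) = (\<lambda>x y. 0))"

definition proper_lie_automorphism :: "(('a::order \<Rightarrow> 'a \<Rightarrow> 'k::field) \<Rightarrow> ('a \<Rightarrow> 'a \<Rightarrow> 'k)) \<Rightarrow> bool" where
  "proper_lie_automorphism \<Phi> \<longleftrightarrow> (\<exists>\<psi> \<nu>. central_trace \<nu> \<and>
     ((alg_automorphism \<psi> \<and> (\<forall>f \<in> incidence. \<Phi> f = (\<lambda>x y. \<psi> f x y + \<nu> f x y))) \<or>
      (alg_anti_automorphism \<psi> \<and> (\<forall>f \<in> incidence. \<Phi> f = (\<lambda>x y. - \<psi> f x y + \<nu> f x y)))))"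

definition poset_connected :: "'a::order itself \<Rightarrow> bool" where
  "poset_connected _ \<longleftrightarrow> (\<forall>x y::'a. (\<lambda>a b. a \<le> b \<or> b \<le> a)\<^sup>*\<^sup>* x y)"

definition is_chain :: "'a::order set \<Rightarrow> bool" where
  "is_chain C \<longleftrightarrow> (\<forall>x\<in>C. \<forall>y\<in>C. x \<le> y \<or> y \<le> x)"

definition max_chain :: "'a::order set \<Rightarrow> bool" where
  "max_chain C \<longleftrightarrow> is_chain C \<and> (\<forall>D. is_chain D \<and> C \<subseteq> D \<longrightarrow> D = C)"

definition min_elems :: "'a::order set" where
  "min_elems = {x. \<forall>y. y \<le> x \<longrightarrow> y = x}"

definition max_elems :: "'a::order set" where
  "max_elems = {x. \<forall>y. x \<le> y \<longrightarrow> y = x}"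

definition chains_linked :: "'a::order set \<Rightarrow> 'a set \<Rightarrow> bool" where
  "chains_linked C D \<longleftrightarrow> (\<exists>x \<in> C \<inter> D. x \<notin> min_elems \<union> max_elems)"

definition chain_equiv :: "'a::order set \<Rightarrow> 'a set \<Rightarrow> bool" where
  "chain_equiv C D \<longleftrightarrow> max_chain C \<and> max_chain D \<and>
     (\<lambda>A B. max_chain A \<and> max_chain B \<and> (chains_linked A B \<or> chains_linked B A))\<^sup>*\<^sup>* C D"

end

theory Submission
  imports Defs
begin
definition E :: "'a::order \<Rightarrow> 'a \<Rightarrow> ('a \<Rightarrow> 'a \<Rightarrow> 'k::field)" where
  "E a b = (\<lambda>u v. if u = a \<and> v = b then 1 else 0)"

definition mm :: "('a::finite \<Rightarrow> 'a \<Rightarrow> 'k::field) \<Rightarrow> ('a \<Rightarrow> 'a \<Rightarrow> 'k) \<Rightarrow> ('a \<Rightarrow> 'a \<Rightarrow> 'k)" where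
  "mm f g = (\<lambda>x y. \<Sum>z\<in>UNIV. f x z * g z y)"

definition dl :: "'a \<Rightarrow> 'a \<Rightarrow> 'k::field" where
  "dl = (\<lambda>x y. if x = y then 1 else 0)"

definition smul :: "'k::field \<Rightarrow> ('a \<Rightarrow> 'a \<Rightarrow> 'k) \<Rightarrow> ('a \<Rightarrow> 'a \<Rightarrow> 'k)" where
  "smul c f = (\<lambda>x y. c * f x y)"

definition JJ :: "('a::order \<Rightarrow> 'a \<Rightarrow> 'k::field) set" where
  "JJ = {f \<in> incidence. \<forall>x. f x x = 0}"

definition DD :: "('a::order \<Rightarrow> 'a \<Rightarrow> 'k::field) set" where
  "DD = {f. \<forall>x y. x \<noteq> y \<longrightarrow> f x y = 0}"

lemma inc_iff: "f \<in> incidence \<longleftrightarrow> (\<forall>x y. \<not> x \<le> y \<longrightarrow> f x y = 0)"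
  by (simp add: incidence_def)

lemma incD: "f \<in> incidence \<Longrightarrow> \<not> x \<le> y \<Longrightarrow> f x y = 0"
  by (simp add: incidence_def)

lemma incD': "f \<in> incidence \<Longrightarrow> f x y \<noteq> 0 \<Longrightarrow> x \<le> y"
  using incD by blast

lemma if1_mult: "(if P then 1 else 0) * (t::'k::field) = (if P then t else 0)"
  by simp

lemma mult_if1: "(t::'k::field) * (if P then 1 else 0) = (if P then t else 0)"
  by simp

lemma E_inc: "a \<le> b \<Longrightarrow> E a b \<in> incidence"
  by (auto simp: incidence_def E_def)

lemma dl_inc: "dl \<in> incidence"
  by (auto simp: incidence_def dl_def)

lemma DD_inc: "f \<in> DD \<Longrightarrow> f \<in> incidence"
  by (auto simp: incidence_def DD_def)

lemma zero_inc: "(\<lambda>x y. 0) \<in> incidence"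
  by (auto simp: incidence_def)

lemma add_inc: "f \<in> incidence \<Longrightarrow> g \<in> incidence \<Longrightarrow> (\<lambda>x y. f x y + g x y) \<in> incidence"
  by (auto simp: incidence_def)

lemma diff_inc: "f \<in> incidence \<Longrightarrow> g \<in> incidence \<Longrightarrow> (\<lambda>x y. f x y - g x y) \<in> incidence"
  by (auto simp: incidence_def)

lemma smul_inc: "f \<in> incidence \<Longrightarrow> smul c f \<in> incidence"
  by (auto simp: incidence_def smul_def)

lemma sum_inc: "(\<And>i. i \<in> S \<Longrightarrow> F i \<in> incidence) \<Longrightarrow> (\<lambda>x y. \<Sum>i\<in>S. F i x y) \<in> incidence"
  by (auto simp: incidence_def intro!: sum.neutral)

lemma mm_inc:
  fixes f g :: "'a::{finite,order} \<Rightarrow> 'a \<Rightarrow> 'k::field"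
  assumes "f \<in> incidence" "g \<in> incidence"
  shows "mm f g \<in> incidence"
  unfolding inc_iff mm_def
proof (intro allI impI)
  fix x y :: 'a assume "\<not> x \<le> y"
  show "(\<Sum>z\<in>UNIV. f x z * g z y) = 0"
  proof (rule sum.neutral, intro ballI)
    fix z
    show "f x z * g z y = 0"
    proof (cases "x \<le> z")
      case True
      then have "\<not> z \<le> y" using \<open>\<not> x \<le> y\<close> order_trans by blast
      then show ?thesis using assms(2) by (simp add: incD)
    next
      case False
      then show ?thesis using assms(1) by (simp add: incD)
    qed
  qed
qed

lemma inc_mult_mm:
  fixes f g :: "'a::{finite,order} \<Rightarrow> 'a \<Rightarrow> 'k::field"
  assumes "f \<in> incidence" "g \<in> incidence"
  shows "inc_mult f g = mm f g"
proof (rule ext, rule ext)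
  fix x y :: 'a
  show "inc_mult f g x y = mm f g x y"
  proof (cases "x \<le> y")
    case True
    have "(\<Sum>z\<in>{z. x \<le> z \<and> z \<le> y}. f x z * g z y) = (\<Sum>z\<in>UNIV. f x z * g z y)"
    proof (rule sum.mono_neutral_left)
      show "\<forall>i\<in>UNIV - {z. x \<le> z \<and> z \<le> y}. f x i * g i y = 0"
        using assms by (auto dest: incD')
    qed auto
    then show ?thesis using True by (simp add: inc_mult_def mm_def)
  next
    case False
    then show ?thesis using mm_inc[OF assms] by (simp add: inc_mult_def incD)
  qed
qed

lemma inc_comm_mm:
  fixes f g :: "'a::{finite,order} \<Rightarrow> 'a \<Rightarrow> 'k::field"
  assumes "f \<in> incidence" "g \<in> incidence"
  shows "inc_comm f g = (\<lambda>x y. mm f g x y - mm g f x y)"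
  using assms by (simp add: inc_comm_def inc_mult_mm)

lemma mm_assoc: "mm (mm f g) h = mm f (mm g h)"
proof (rule ext, rule ext)
  fix x y
  have "mm (mm f g) h x y = (\<Sum>w\<in>UNIV. \<Sum>z\<in>UNIV. f x z * g z w * h w y)"
    by (simp add: mm_def sum_distrib_right)
  also have "\<dots> = (\<Sum>z\<in>UNIV. \<Sum>w\<in>UNIV. f x z * g z w * h w y)"
    by (rule sum.swap)
  also have "\<dots> = mm f (mm g h) x y"
    by (simp add: mm_def sum_distrib_left mult.assoc)
  finally show "mm (mm f g) h x y = mm f (mm g h) x y" .
qed

lemma mm_dl_left: "mm dl f = f"
  by (simp add: mm_def dl_def if1_mult mult_if1 cong: if_cong)

lemma mm_dl_right: "mm f dl = f"
  by (simp add: mm_def dl_def if1_mult mult_if1 cong: if_cong)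

lemma mm_add_left: "mm (\<lambda>x y. f x y + g x y) h = (\<lambda>x y. mm f h x y + mm g h x y)"
  by (simp add: mm_def distrib_right sum.distrib)

lemma mm_add_right: "mm h (\<lambda>x y. f x y + g x y) = (\<lambda>x y. mm h f x y + mm h g x y)"
  by (simp add: mm_def distrib_left sum.distrib)

lemma mm_diff_left: "mm (\<lambda>x y. f x y - g x y) h = (\<lambda>x y. mm f h x y - mm g h x y)"
  by (simp add: mm_def left_diff_distrib sum_subtractf)

lemma mm_diff_right: "mm h (\<lambda>x y. f x y - g x y) = (\<lambda>x y. mm h f x y - mm h g x y)"
  by (simp add: mm_def right_diff_distrib sum_subtractf)

lemma mm_smul_left: "mm (smul c f) g = smul c (mm f g)"
  by (simp add: mm_def smul_def sum_distrib_left mult.assoc)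

lemma mm_smul_right: "mm f (smul c g) = smul c (mm f g)"
  by (simp add: mm_def smul_def sum_distrib_left mult.assoc mult.left_commute)

lemma mm_zero_left: "mm (\<lambda>x y. 0) f = (\<lambda>x y. 0)"
  by (simp add: mm_def)

lemma mm_zero_right: "mm f (\<lambda>x y. 0) = (\<lambda>x y. 0)"
  by (simp add: mm_def)

lemma mm_sum_left: "mm (\<lambda>x y. \<Sum>i\<in>S. F i x y) g = (\<lambda>x y. \<Sum>i\<in>S. mm (F i) g x y)"
  by (simp add: mm_def sum_distrib_right sum.swap[of _ S])

lemma mm_sum_right: "mm g (\<lambda>x y. \<Sum>i\<in>S. F i x y) = (\<lambda>x y. \<Sum>i\<in>S. mm g (F i) x y)"
  by (simp add: mm_def sum_distrib_left sum.swap[of _ S])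

lemma mm_E_E: "mm (E a b) (E c d) = (if b = c then E a d else (\<lambda>x y. 0))"
  by (auto simp: mm_def E_def if1_mult mult_if1 if_distrib[of "\<lambda>t. t * _"] cong: if_cong intro!: ext)

lemma mm_diag:
  fixes f g :: "'a::{finite,order} \<Rightarrow> 'a \<Rightarrow> 'k::field"
  assumes "f \<in> incidence" "g \<in> incidence"
  shows "mm f g x x = f x x * g x x"
proof -
  have "mm f g x x = (\<Sum>z\<in>{x}. f x z * g z x)"
    unfolding mm_def
    by (rule sum.mono_neutral_right) (use assms in \<open>auto dest!: incD' intro: antisym\<close>)
  then show ?thesis by simp
qed

lemma mm_E_left: "mm (E a b) f = (\<lambda>x y. if x = a then f b y else 0)"
  by (auto simp: mm_def E_def if1_mult mult_if1 if_distrib[of "\<lambda>t. t * _"] cong: if_cong intro!: ext)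

lemma mm_E_right: "mm f (E a b) = (\<lambda>x y. if y = b then f x a else 0)"
  by (auto simp: mm_def E_def if1_mult mult_if1 if_distrib[of "\<lambda>t. t * _"] cong: if_cong intro!: ext)

lemma lin_add: "inc_linear \<phi> \<Longrightarrow> f \<in> incidence \<Longrightarrow> g \<in> incidence \<Longrightarrow>
   \<phi> (\<lambda>x y. f x y + g x y) = (\<lambda>x y. \<phi> f x y + \<phi> g x y)"
  by (simp add: inc_linear_def)

lemma lin_smul: "inc_linear \<phi> \<Longrightarrow> f \<in> incidence \<Longrightarrow> \<phi> (smul c f) = smul c (\<phi> f)"
  by (simp add: inc_linear_def smul_def)

lemma smul_zero_fun: "smul 0 f = (\<lambda>x y. 0)"
  by (simp add: smul_def)

lemma lin_zero: "inc_linear \<phi> \<Longrightarrow> \<phi> (\<lambda>x y. 0) = (\<lambda>x y. 0)"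
  using lin_smul[of \<phi> "\<lambda>x y. 0" 0] zero_inc by (simp add: smul_zero_fun)

lemma lin_diff: "inc_linear \<phi> \<Longrightarrow> f \<in> incidence \<Longrightarrow> g \<in> incidence \<Longrightarrow>
   \<phi> (\<lambda>x y. f x y - g x y) = (\<lambda>x y. \<phi> f x y - \<phi> g x y)"
proof -
  assume a: "inc_linear \<phi>" "f \<in> incidence" "g \<in> incidence"
  have "(\<lambda>x y. f x y - g x y) = (\<lambda>x y. f x y + smul (-1) g x y)"
    by (simp add: smul_def)
  then have "\<phi> (\<lambda>x y. f x y - g x y) = (\<lambda>x y. \<phi> f x y + \<phi> (smul (-1) g) x y)"
    using lin_add[OF a(1) a(2) smul_inc[OF a(3)]] by simp
  also have "\<dots> = (\<lambda>x y. \<phi> f x y - \<phi> g x y)"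
    unfolding lin_smul[OF a(1) a(3)] by (simp add: smul_def)
  finally show ?thesis .
qed

lemma lin_sum: assumes lin: "inc_linear \<phi>" shows "finite S \<Longrightarrow> (\<And>i. i \<in> S \<Longrightarrow> F i \<in> incidence) \<Longrightarrow>
   \<phi> (\<lambda>x y. \<Sum>i\<in>S. F i x y) = (\<lambda>x y. \<Sum>i\<in>S. \<phi> (F i) x y)"
proof (induction S rule: finite_induct)
  case empty
  then show ?case by (simp add: lin_zero[OF lin])
next
  case (insert a S)
  have "\<phi> (\<lambda>x y. \<Sum>i\<in>insert a S. F i x y) = \<phi> (\<lambda>x y. F a x y + (\<Sum>i\<in>S. F i x y))"
    using insert by simp
  also have "\<dots> = (\<lambda>x y. \<phi> (F a) x y + \<phi> (\<lambda>x y. \<Sum>i\<in>S. F i x y) x y)"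
    using insert lin by (intro lin_add sum_inc) auto
  also have "\<dots> = (\<lambda>x y. \<Sum>i\<in>insert a S. \<phi> (F i) x y)"
    using insert by simp
  finally show ?case .
qed

lemma smul_E_inc: "f \<in> incidence \<Longrightarrow> smul (f a b) (E a b) \<in> incidence"
  by (cases "a \<le> b") (auto simp: E_inc smul_inc incD smul_zero_fun zero_inc)

lemma basis_expand:
  fixes f :: "'a::{finite,order} \<Rightarrow> 'a \<Rightarrow> 'k::field"
  shows "f = (\<lambda>x y. \<Sum>p\<in>UNIV. smul (f (fst p) (snd p)) (E (fst p) (snd p)) x y)"
proof (rule ext, rule ext)
  fix x y
  have "(\<Sum>p\<in>UNIV. smul (f (fst p) (snd p)) (E (fst p) (snd p)) x y)
      = (\<Sum>p\<in>UNIV. if p = (x, y) then f x y else 0)"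
    by (rule sum.cong) (auto simp: smul_def E_def)
  also have "\<dots> = f x y" by simp
  finally show "f x y = (\<Sum>p\<in>UNIV. smul (f (fst p) (snd p)) (E (fst p) (snd p)) x y)" by simp
qed

lemma lin_expand:
  fixes \<phi> :: "('a::{finite,order} \<Rightarrow> 'a \<Rightarrow> 'k::field) \<Rightarrow> _"
  assumes "inc_linear \<phi>" "f \<in> incidence"
  shows "\<phi> f = (\<lambda>x y. \<Sum>p\<in>UNIV. f (fst p) (snd p) * \<phi> (E (fst p) (snd p)) x y)"
proof -
  have "\<phi> f = \<phi> (\<lambda>x y. \<Sum>p\<in>UNIV. smul (f (fst p) (snd p)) (E (fst p) (snd p)) x y)"
    by (rule arg_cong[where f=\<phi>, OF basis_expand])
  also have "\<dots> = (\<lambda>x y. \<Sum>p\<in>UNIV. \<phi> (smul (f (fst p) (snd p)) (E (fst p) (snd p))) x y)"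
    using assms by (intro lin_sum) (auto simp: smul_E_inc)
  also have "\<dots> = (\<lambda>x y. \<Sum>p\<in>UNIV. f (fst p) (snd p) * \<phi> (E (fst p) (snd p)) x y)"
  proof (intro ext sum.cong refl)
    fix x y and p :: "'a \<times> 'a"
    show "\<phi> (smul (f (fst p) (snd p)) (E (fst p) (snd p))) x y = f (fst p) (snd p) * \<phi> (E (fst p) (snd p)) x y"
    proof (cases "fst p \<le> snd p")
      case True
      show ?thesis unfolding lin_smul[OF assms(1) E_inc[OF True]] by (simp add: smul_def)
    next
      case False
      then show ?thesis using assms by (simp add: incD smul_zero_fun lin_zero)
    qed
  qed
  finally show ?thesis .
qed

lemma lin_ext:
  fixes \<phi> \<psi> :: "('a::{finite,order} \<Rightarrow> 'a \<Rightarrow> 'k::field) \<Rightarrow> _"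
  assumes "inc_linear \<phi>" "inc_linear \<psi>" "\<And>a b. a \<le> b \<Longrightarrow> \<phi> (E a b) = \<psi> (E a b)"
    and "f \<in> incidence"
  shows "\<phi> f = \<psi> f"
proof -
  have "(\<Sum>p\<in>UNIV. f (fst p) (snd p) * \<phi> (E (fst p) (snd p)) x y) = (\<Sum>p\<in>UNIV. f (fst p) (snd p) * \<psi> (E (fst p) (snd p)) x y)" for x y
  proof (rule sum.cong[OF refl])
    fix p :: "'a \<times> 'a"
    show "f (fst p) (snd p) * \<phi> (E (fst p) (snd p)) x y = f (fst p) (snd p) * \<psi> (E (fst p) (snd p)) x y"
    proof (cases "fst p \<le> snd p")
      case True
      then show ?thesis using assms(3) by metis
    next
      case False
      then show ?thesis using incD[OF assms(4) False] by simp
    qed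
  qed
  then show ?thesis
    unfolding lin_expand[OF assms(1,4)] lin_expand[OF assms(2,4)] by simp
qed

lemma lie_lin: "lie_automorphism \<phi> \<Longrightarrow> inc_linear \<phi>"
  by (simp add: lie_automorphism_def inc_lin_bij_def)

lemma lie_bij: "lie_automorphism \<phi> \<Longrightarrow> bij_betw \<phi> incidence incidence"
  by (simp add: lie_automorphism_def inc_lin_bij_def)

lemma lie_inc: assumes "lie_automorphism \<phi>" "f \<in> incidence" shows "\<phi> f \<in> incidence"
  using bij_betwE[OF lie_bij[OF assms(1)]] assms(2) by blast

lemma lie_comm: "lie_automorphism \<phi> \<Longrightarrow> f \<in> incidence \<Longrightarrow> g \<in> incidence \<Longrightarrow>
   \<phi> (inc_comm f g) = inc_comm (\<phi> f) (\<phi> g)"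
  by (simp add: lie_automorphism_def)

lemma lie_inj: assumes "lie_automorphism \<phi>" "f \<in> incidence" "g \<in> incidence" "\<phi> f = \<phi> g" shows "f = g"
proof -
  have "inj_on \<phi> incidence" using lie_bij[OF assms(1)] bij_betw_imp_inj_on by blast
  then show ?thesis using assms(2-4) by (simp add: inj_on_def)
qed

lemma lie_zero_iff: assumes "lie_automorphism \<phi>" "f \<in> incidence" "\<phi> f = (\<lambda>x y. 0)" shows "f = (\<lambda>x y. 0)"
proof -
  have "\<phi> (\<lambda>x y. 0) = (\<lambda>x y. 0)" using lin_zero[OF lie_lin[OF assms(1)]] .
  then show ?thesis using lie_inj[OF assms(1) assms(2) zero_inc] assms(3) by simp
qed

lemma lin_inv:
  assumes "inc_linear \<phi>" "bij_betw \<phi> incidence incidence"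
  shows "inc_linear (inv_into incidence \<phi>)"
proof -
  let ?i = "inv_into incidence \<phi>"
  have ii: "f \<in> incidence \<Longrightarrow> ?i f \<in> incidence" for f
    using bij_betwE[OF bij_betw_inv_into[OF assms(2)]] by blast
  have fi: "f \<in> incidence \<Longrightarrow> \<phi> (?i f) = f" for f
    using bij_betw_inv_into_right[OF assms(2)] by blast
  have if': "f \<in> incidence \<Longrightarrow> ?i (\<phi> f) = f" for f
    using bij_betw_inv_into_left[OF assms(2)] by blast
  show ?thesis unfolding inc_linear_def
  proof (intro conjI ballI allI)
    fix f g :: "'a \<Rightarrow> 'a \<Rightarrow> 'b" assume fg: "f \<in> incidence" "g \<in> incidence"
    then have eq: "\<phi> (\<lambda>x y. ?i f x y + ?i g x y) = (\<lambda>x y. f x y + g x y)"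
      using lin_add[OF assms(1) ii ii] fi by simp
    have "?i (\<lambda>x y. f x y + g x y) = ?i (\<phi> (\<lambda>x y. ?i f x y + ?i g x y))"
      by (simp only: eq)
    also have "\<dots> = (\<lambda>x y. ?i f x y + ?i g x y)"
      by (rule if'[OF add_inc[OF ii ii]]) (use fg in auto)
    finally show "?i (\<lambda>x y. f x y + g x y) = (\<lambda>x y. ?i f x y + ?i g x y)" .
  next
    fix c and f :: "'a \<Rightarrow> 'a \<Rightarrow> 'b" assume fi': "f \<in> incidence"
    then have eq: "\<phi> (smul c (?i f)) = (\<lambda>x y. c * f x y)"
      using lin_smul[OF assms(1) ii[OF fi']] fi by (simp add: smul_def)
    have "?i (\<lambda>x y. c * f x y) = ?i (\<phi> (smul c (?i f)))"
      by (simp only: eq)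
    also have "\<dots> = smul c (?i f)"
      by (rule if'[OF smul_inc[OF ii[OF fi']]])
    finally show "?i (\<lambda>x y. c * f x y) = (\<lambda>x y. c * ?i f x y)" by (simp add: smul_def)
  qed
qed

lemma comm_inc: "f \<in> incidence \<Longrightarrow> g \<in> incidence \<Longrightarrow> inc_comm f g \<in> incidence"
  by (auto simp: inc_comm_def inc_mult_def incidence_def)

lemma lie_inv:
  assumes "lie_automorphism \<phi>"
  shows "lie_automorphism (inv_into incidence \<phi>)"
proof -
  let ?i = "inv_into incidence \<phi>"
  have b: "bij_betw \<phi> incidence incidence" using lie_bij[OF assms] .
  have ii: "f \<in> incidence \<Longrightarrow> ?i f \<in> incidence" for f
    using bij_betwE[OF bij_betw_inv_into[OF b]] by blast
  have fi: "f \<in> incidence \<Longrightarrow> \<phi> (?i f) = f" for f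
    using bij_betw_inv_into_right[OF b] by blast
  have if': "f \<in> incidence \<Longrightarrow> ?i (\<phi> f) = f" for f
    using bij_betw_inv_into_left[OF b] by blast
  have "inc_linear ?i" using lin_inv[OF lie_lin[OF assms] b] .
  moreover have "bij_betw ?i incidence incidence" using bij_betw_inv_into[OF b] .
  moreover have "?i (inc_comm f g) = inc_comm (?i f) (?i g)" if fg: "f \<in> incidence" "g \<in> incidence" for f g
  proof -
    have eq: "\<phi> (inc_comm (?i f) (?i g)) = inc_comm f g"
      using lie_comm[OF assms ii[OF fg(1)] ii[OF fg(2)]] fi[OF fg(1)] fi[OF fg(2)] by simp
    have "?i (inc_comm f g) = ?i (\<phi> (inc_comm (?i f) (?i g)))" by (simp only: eq)
    also have "\<dots> = inc_comm (?i f) (?i g)" by (rule if'[OF comm_inc[OF ii[OF fg(1)] ii[OF fg(2)]]])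
    finally show ?thesis .
  qed
  ultimately show ?thesis by (simp add: lie_automorphism_def inc_lin_bij_def)
qed

lemma comm_diag0:
  fixes f g :: "'a::{finite,order} \<Rightarrow> 'a \<Rightarrow> 'k::field"
  assumes "f \<in> incidence" "g \<in> incidence"
  shows "inc_comm f g x x = 0"
  using assms by (simp add: inc_comm_mm mm_diag mult.commute)

lemma E_comm_left:
  fixes a b :: "'a::{finite,order}"
  assumes "a < b"
  shows "inc_comm (E a a) (E a b) = (E a b :: 'a \<Rightarrow> 'a \<Rightarrow> 'k::field)"
proof -
  have "b \<noteq> a" using assms by simp
  then show ?thesis using assms by (simp add: inc_comm_mm E_inc mm_E_E)
qed

lemma lie_J:
  fixes \<phi> :: "('a::{finite,order} \<Rightarrow> 'a \<Rightarrow> 'k::field) \<Rightarrow> _"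
  assumes "lie_automorphism \<phi>" "f \<in> JJ"
  shows "\<phi> f \<in> JJ"
proof -
  have fi: "f \<in> incidence" using assms by (simp add: JJ_def)
  have "\<phi> f x x = 0" for x
  proof -
    have "\<phi> f x x = (\<Sum>p\<in>UNIV. f (fst p) (snd p) * \<phi> (E (fst p) (snd p)) x x)"
      using lin_expand[OF lie_lin[OF assms(1)] fi] by simp
    also have "\<dots> = 0"
    proof (rule sum.neutral, intro ballI)
      fix p :: "'a \<times> 'a"
      obtain a b where p: "p = (a, b)" by fastforce
      show "f (fst p) (snd p) * \<phi> (E (fst p) (snd p)) x x = 0"
      proof (cases "a < b")
        case True
        have "\<phi> (E a b) x x = \<phi> (inc_comm (E a a) (E a b)) x x" by (simp only: E_comm_left[OF True])
        also have "\<dots> = 0"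
          using lie_comm[OF assms(1) E_inc[of a a] E_inc[of a b]] True
            comm_diag0[OF lie_inc[OF assms(1) E_inc[of a a]] lie_inc[OF assms(1) E_inc[of a b]]]
          by simp
        finally show ?thesis using p by simp
      next
        case False
        then have "f a b = 0" using assms(2) by (cases "a = b") (auto simp: JJ_def incD)
        then show ?thesis using p by simp
      qed
    qed
    finally show ?thesis .
  qed
  then show ?thesis using lie_inc[OF assms(1) fi] by (simp add: JJ_def)
qed

lemma mm_diff_dl_left: "mm (\<lambda>x y. dl x y - n x y) h = (\<lambda>x y. h x y - mm n h x y)"
  by (simp add: mm_diff_left mm_dl_left)

lemma mm_diff_dl_right: "mm h (\<lambda>x y. dl x y - n x y) = (\<lambda>x y. h x y - mm h n x y)"
  by (simp add: mm_diff_right mm_dl_right)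

fun npow :: "('a::finite \<Rightarrow> 'a \<Rightarrow> 'k::field) \<Rightarrow> nat \<Rightarrow> ('a \<Rightarrow> 'a \<Rightarrow> 'k)" where
  "npow n 0 = dl"
| "npow n (Suc k) = mm n (npow n k)"

lemma npow_comm: "mm (npow n k) n = mm n (npow n k)"
  by (induction k) (simp_all add: mm_dl_left mm_dl_right mm_assoc)

lemma npow_inc: "n \<in> incidence \<Longrightarrow> npow n k \<in> incidence"
  by (induction k) (simp_all add: dl_inc mm_inc)

lemma npow_supp:
  fixes n :: "'a::{finite,order} \<Rightarrow> 'a \<Rightarrow> 'k::field"
  assumes "n \<in> JJ"
  shows "npow n k x y \<noteq> 0 \<Longrightarrow> x \<le> y \<and> k + 1 \<le> card {z. x \<le> z \<and> z \<le> y}"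
proof (induction k arbitrary: x)
  case 0
  then have "x = y" by (simp add: dl_def split: if_splits)
  then have "{z. x \<le> z \<and> z \<le> y} = {x}" by (auto intro: antisym)
  then show ?case using \<open>x = y\<close> by simp
next
  case (Suc k)
  then have "(\<Sum>z\<in>UNIV. n x z * npow n k z y) \<noteq> 0" by (simp add: mm_def)
  then obtain z where z: "n x z * npow n k z y \<noteq> 0" by (rule sum.not_neutral_contains_not_neutral) 
  then have nz: "n x z \<noteq> 0" and pz: "npow n k z y \<noteq> 0" by auto
  have "x \<le> z" using nz assms by (auto simp: JJ_def dest: incD')
  moreover have "x \<noteq> z" using nz assms by (auto simp: JJ_def)
  ultimately have xz: "x < z" by simp
  from Suc.IH[OF pz] have zy: "z \<le> y" and c: "k + 1 \<le> card {w. z \<le> w \<and> w \<le> y}" by auto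
  have sub: "insert x {w. z \<le> w \<and> w \<le> y} \<subseteq> {w. x \<le> w \<and> w \<le> y}"
    using xz zy by auto
  have "x \<notin> {w. z \<le> w \<and> w \<le> y}" using xz by auto
  then have "card (insert x {w. z \<le> w \<and> w \<le> y}) = Suc (card {w. z \<le> w \<and> w \<le> y})"
    by simp
  moreover have "card (insert x {w. z \<le> w \<and> w \<le> y}) \<le> card {w. x \<le> w \<and> w \<le> y}"
    by (rule card_mono[OF _ sub]) simp
  ultimately show ?case using c xz zy by auto
qed

lemma npow_nil:
  fixes n :: "'a::{finite,order} \<Rightarrow> 'a \<Rightarrow> 'k::field"
  assumes "n \<in> JJ"
  shows "npow n (card (UNIV :: 'a set)) = (\<lambda>x y. 0)"
proof (rule ext, rule ext, rule ccontr)
  fix x y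
  assume "npow n (card (UNIV :: 'a set)) x y \<noteq> 0"
  from npow_supp[OF assms this] have "card (UNIV :: 'a set) + 1 \<le> card {z. x \<le> z \<and> z \<le> y}" by simp
  moreover have "card {z. x \<le> z \<and> z \<le> y} \<le> card (UNIV :: 'a set)" by (rule card_mono) auto
  ultimately show False by simp
qed

lemma unit_exists:
  fixes g :: "'a::{finite,order} \<Rightarrow> 'a \<Rightarrow> 'k::field"
  assumes "g \<in> incidence" "\<And>x. g x x = 1"
  shows "\<exists>h\<in>incidence. mm g h = dl \<and> mm h g = dl"
proof -
  define n where "n = (\<lambda>x y. dl x y - g x y)"
  have ninc: "n \<in> incidence" unfolding n_def by (rule diff_inc[OF dl_inc assms(1)])
  have nJ: "n \<in> JJ" using ninc assms(2) by (simp add: n_def JJ_def dl_def)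
  have g: "g = (\<lambda>x y. dl x y - n x y)" by (simp add: n_def)
  define N where "N = card (UNIV :: 'a set)"
  define h where "h = (\<lambda>x y. \<Sum>k<N. npow n k x y)"
  have hinc: "h \<in> incidence" unfolding h_def by (rule sum_inc) (simp add: npow_inc ninc)
  have nil: "npow n N = (\<lambda>x y. 0)" using npow_nil[OF nJ] by (simp add: N_def)
  have "mm g h = (\<lambda>x y. h x y - mm n h x y)" by (simp add: g mm_diff_dl_left)
  also have "\<dots> = (\<lambda>x y. \<Sum>k<N. npow n k x y - npow n (Suc k) x y)"
    by (simp add: h_def mm_sum_right sum_subtractf)
  also have "\<dots> = (\<lambda>x y. npow n 0 x y - npow n N x y)"
    by (intro ext) (rule sum_lessThan_telescope')
  also have "\<dots> = dl" using nil by simp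
  finally have 1: "mm g h = dl" .
  have "mm h g = (\<lambda>x y. h x y - mm h n x y)" by (simp add: g mm_diff_dl_right)
  also have "\<dots> = (\<lambda>x y. \<Sum>k<N. npow n k x y - npow n (Suc k) x y)"
    by (simp add: h_def mm_sum_left sum_subtractf npow_comm)
  also have "\<dots> = (\<lambda>x y. npow n 0 x y - npow n N x y)"
    by (intro ext) (rule sum_lessThan_telescope')
  also have "\<dots> = dl" using nil by simp
  finally have 2: "mm h g = dl" .
  show ?thesis using 1 2 hinc by blast
qed

definition diag :: "('a \<Rightarrow> 'a \<Rightarrow> 'k::field) \<Rightarrow> ('a \<Rightarrow> 'a \<Rightarrow> 'k)" where
  "diag f = (\<lambda>x y. if x = y then f x x else 0)"

lemma diag_DD: "diag f \<in> DD"
  by (simp add: diag_def DD_def)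

lemma DD_J_zero: "d \<in> DD \<Longrightarrow> d \<in> JJ \<Longrightarrow> d = (\<lambda>x y. 0)"
  by (auto simp: DD_def JJ_def intro!: ext) (metis)

lemma comm_eq0_iff:
  fixes f g :: "'a::{finite,order} \<Rightarrow> 'a \<Rightarrow> 'k::field"
  assumes "f \<in> incidence" "g \<in> incidence"
  shows "inc_comm f g = (\<lambda>x y. 0) \<longleftrightarrow> mm f g = mm g f"
proof
  assume "inc_comm f g = (\<lambda>x y. 0)"
  then have "\<And>x y. mm f g x y - mm g f x y = 0" using inc_comm_mm[OF assms] by metis
  then show "mm f g = mm g f" by (intro ext) simp
next
  assume "mm f g = mm g f"
  then show "inc_comm f g = (\<lambda>x y. 0)" using inc_comm_mm[OF assms] by simp
qed

lemma centralizer_D: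
  fixes a :: "'a::{finite,order} \<Rightarrow> 'a \<Rightarrow> 'k::field"
  assumes "\<And>x. mm a (E x x) = mm (E x x) a"
  shows "a \<in> DD"
  unfolding DD_def
proof (intro CollectI allI impI)
  fix u v :: 'a assume "u \<noteq> v"
  have "mm a (E u u) u v = mm (E u u) a u v" using assms by simp
  then show "a u v = 0" using \<open>u \<noteq> v\<close> by (simp add: mm_E_left mm_E_right)
qed

lemma mm_DD:
  fixes d d' :: "'a::{finite,order} \<Rightarrow> 'a \<Rightarrow> 'k::field"
  assumes "d \<in> DD" "d' \<in> DD"
  shows "mm d d' = (\<lambda>x y. if x = y then d x x * d' x x else 0)"
proof (intro ext)
  fix x y
  have "mm d d' x y = (\<Sum>z\<in>{x}. d x z * d' z y)"
    unfolding mm_def by (rule sum.mono_neutral_right) (use assms in \<open>auto simp: DD_def\<close>)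
  then show "mm d d' x y = (if x = y then d x x * d' x x else 0)"
    using assms by (auto simp: DD_def)
qed

lemma DD_comm: "d \<in> DD \<Longrightarrow> d' \<in> DD \<Longrightarrow> mm d d' = mm d' (d :: 'a::{finite,order} \<Rightarrow> 'a \<Rightarrow> 'k::field)"
  unfolding mm_DD by (intro ext) (simp add: mult.commute)

lemma E_DD: "E a a \<in> DD"
  by (simp add: E_def DD_def)

context
  fixes \<phi> :: "('a::{finite,order} \<Rightarrow> 'a \<Rightarrow> 'k::field) \<Rightarrow> ('a \<Rightarrow> 'a \<Rightarrow> 'k)"
  assumes lie: "lie_automorphism \<phi>"
begin

lemma L_lin: "inc_linear \<phi>" using lie_lin[OF lie] .
lemma L_inc: "f \<in> incidence \<Longrightarrow> \<phi> f \<in> incidence" using lie_inc[OF lie] .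

abbreviation "phii \<equiv> inv_into incidence \<phi>"

lemma Li_lie: "lie_automorphism phii" using lie_inv[OF lie] .
lemma Li_inc: "f \<in> incidence \<Longrightarrow> phii f \<in> incidence" using lie_inc[OF Li_lie] .
lemma L_Li: "f \<in> incidence \<Longrightarrow> \<phi> (phii f) = f"
  using bij_betw_inv_into_right[OF lie_bij[OF lie]] by blast
lemma Li_L: "f \<in> incidence \<Longrightarrow> phii (\<phi> f) = f"
  using bij_betw_inv_into_left[OF lie_bij[OF lie]] by blast

lemma L_DD_comm:
  assumes "d \<in> DD" "d' \<in> DD"
  shows "mm (\<phi> d) (\<phi> d') = mm (\<phi> d') (\<phi> d)"
proof -
  have di: "d \<in> incidence" "d' \<in> incidence" using assms DD_inc by auto
  have "inc_comm d d' = (\<lambda>x y. 0)" using comm_eq0_iff[OF di] DD_comm[OF assms] by simp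
  then have "inc_comm (\<phi> d) (\<phi> d') = (\<lambda>x y. 0)"
    using lie_comm[OF lie di] lin_zero[OF L_lin] by simp
  then show ?thesis using comm_eq0_iff[OF L_inc[OF di(1)] L_inc[OF di(2)]] by simp
qed

lemma L_DD_mult:
  assumes "d1 \<in> DD" "d2 \<in> DD"
  shows "\<exists>a\<in>DD. mm (\<phi> d1) (\<phi> d2) = \<phi> a"
proof -
  have di: "d1 \<in> incidence" "d2 \<in> incidence" using assms DD_inc by auto
  define c where "c = mm (\<phi> d1) (\<phi> d2)"
  have ci: "c \<in> incidence" unfolding c_def using mm_inc L_inc di by blast
  define a where "a = phii c"
  have ai: "a \<in> incidence" unfolding a_def using Li_inc[OF ci] .
  have "mm a (E x x) = mm (E x x) a" for x
  proof -
    have ex: "E x x \<in> incidence" using E_inc by blast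
    have "mm c (\<phi> (E x x)) = mm (\<phi> (E x x)) c"
      unfolding c_def
      using L_DD_comm[OF assms(1) E_DD[of x]] L_DD_comm[OF assms(2) E_DD[of x]]
      by (metis mm_assoc)
    then have "inc_comm c (\<phi> (E x x)) = (\<lambda>x y. 0)"
      using comm_eq0_iff[OF ci L_inc[OF ex]] by simp
    then have "phii (inc_comm c (\<phi> (E x x))) = (\<lambda>x y. 0)"
      using lin_zero[OF lie_lin[OF Li_lie]] by simp
    then have "inc_comm a (E x x) = (\<lambda>x y. 0)"
      using lie_comm[OF Li_lie ci L_inc[OF ex]] Li_L[OF ex] by (simp add: a_def)
    then show ?thesis using comm_eq0_iff[OF ai ex] by simp
  qed
  then have "a \<in> DD" by (rule centralizer_D)
  moreover have "\<phi> a = c" unfolding a_def using L_Li[OF ci] .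
  ultimately show ?thesis unfolding c_def by metis
qed

lemma L_DD_diag_inj:
  assumes "d \<in> DD" "d' \<in> DD" "\<And>x. \<phi> d x x = \<phi> d' x x"
  shows "\<phi> d = \<phi> d'"
proof -
  have di: "d \<in> incidence" "d' \<in> incidence" using assms DD_inc by auto
  define e where "e = (\<lambda>x y. d x y - d' x y)"
  have ei: "e \<in> incidence" unfolding e_def using diff_inc[OF di] .
  have eD: "e \<in> DD" using assms(1,2) by (simp add: e_def DD_def)
  have "\<phi> e = (\<lambda>x y. \<phi> d x y - \<phi> d' x y)" unfolding e_def using lin_diff[OF L_lin di] .
  then have "\<phi> e \<in> JJ" using assms(3) L_inc[OF ei] by (simp add: JJ_def)
  then have "phii (\<phi> e) \<in> JJ" using lie_J[OF Li_lie] by blast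
  then have "e \<in> JJ" using Li_L[OF ei] by simp
  then have "e = (\<lambda>x y. 0)" using DD_J_zero[OF eD] by simp
  then have "d = d'" unfolding e_def by (metis (no_types) eq_iff_diff_eq_0 ext)
  then show ?thesis by simp
qed

definition dd :: "'a \<Rightarrow> ('a \<Rightarrow> 'a \<Rightarrow> 'k)" where
  "dd u = diag (phii (E u u))"

definition EE :: "'a \<Rightarrow> ('a \<Rightarrow> 'a \<Rightarrow> 'k)" where
  "EE u = \<phi> (dd u)"

lemma dd_DD: "dd u \<in> DD" by (simp add: dd_def diag_DD)

lemma EE_diag: "EE u x x = (if x = u then 1 else 0)"
proof -
  have ei: "E u u \<in> incidence" by (rule E_inc) simp
  let ?p = "phii (E u u)"
  have pi: "?p \<in> incidence" using Li_inc[OF ei] .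
  define r where "r = (\<lambda>x y. ?p x y - dd u x y)"
  have ri: "r \<in> incidence" unfolding r_def using diff_inc[OF pi DD_inc[OF dd_DD]] .
  have rJ: "r \<in> JJ" using ri by (simp add: JJ_def r_def dd_def diag_def)
  have "?p = (\<lambda>x y. dd u x y + r x y)" by (simp add: r_def)
  then have "\<phi> ?p = (\<lambda>x y. \<phi> (dd u) x y + \<phi> r x y)"
    using lin_add[OF L_lin DD_inc[OF dd_DD] ri] by simp
  then have "E u u x x = EE u x x + \<phi> r x x" using L_Li[OF ei] by (simp add: EE_def)
  moreover have "\<phi> r x x = 0" using lie_J[OF lie rJ] by (simp add: JJ_def)
  ultimately show ?thesis by (simp add: E_def)
qed

lemma EE_mult: "mm (EE u) (EE v) = (if u = v then EE u else (\<lambda>x y. 0))"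
proof -
  obtain a where aD: "a \<in> DD" and a: "mm (EE u) (EE v) = \<phi> a"
    using L_DD_mult[OF dd_DD dd_DD] unfolding EE_def by blast
  define b where "b = (if u = v then dd u else (\<lambda>x y. 0))"
  have bD: "b \<in> DD" by (simp add: b_def dd_DD) (simp add: DD_def)
  have phib: "\<phi> b = (if u = v then EE u else (\<lambda>x y. 0))"
    by (simp add: b_def EE_def lin_zero[OF L_lin])
  have EEi: "EE w \<in> incidence" for w unfolding EE_def using L_inc[OF DD_inc[OF dd_DD]] .
  have "\<phi> a x x = \<phi> b x x" for x
  proof -
    have "\<phi> a x x = EE u x x * EE v x x" using a[symmetric] mm_diag[OF EEi EEi] by metis
    then show ?thesis using phib by (simp add: EE_diag)
  qed
  then have "\<phi> a = \<phi> b" using L_DD_diag_inj[OF aD bD] by blast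
  then show ?thesis using a phib by simp
qed

lemma EE_inc: "EE w \<in> incidence"
  unfolding EE_def using L_inc[OF DD_inc[OF dd_DD]] .

lemma EE_span:
  assumes "d \<in> DD"
  shows "\<phi> d = (\<lambda>x y. \<Sum>u\<in>UNIV. smul (\<phi> d u u) (EE u) x y)"
proof -
  define s where "s = (\<lambda>x y. \<Sum>u\<in>UNIV. smul (\<phi> d u u) (dd u) x y)"
  have sD: "s \<in> DD" unfolding s_def DD_def smul_def dd_def diag_def by simp
  have "\<phi> s = (\<lambda>x y. \<Sum>u\<in>UNIV. \<phi> (smul (\<phi> d u u) (dd u)) x y)"
    unfolding s_def by (rule lin_sum[OF L_lin]) (auto intro: smul_inc DD_inc dd_DD)
  also have "\<dots> = (\<lambda>x y. \<Sum>u\<in>UNIV. smul (\<phi> d u u) (EE u) x y)"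
    by (simp add: lin_smul[OF L_lin DD_inc[OF dd_DD]] EE_def)
  finally have ps: "\<phi> s = (\<lambda>x y. \<Sum>u\<in>UNIV. smul (\<phi> d u u) (EE u) x y)" .
  have "\<phi> d x x = \<phi> s x x" for x
    by (simp add: ps smul_def EE_diag if_distrib cong: if_cong)
  then have "\<phi> d = \<phi> s" using L_DD_diag_inj[OF assms sD] by blast
  then show ?thesis using ps by simp
qed

definition gg :: "'a \<Rightarrow> 'a \<Rightarrow> 'k" where
  "gg = (\<lambda>x y. EE x x y)"

lemma gg_inc: "gg \<in> incidence"
  using EE_inc by (auto simp: gg_def incidence_def)

lemma gg_diag: "gg x x = 1"
  by (simp add: gg_def EE_diag)

lemma gg_EE: "mm gg (EE v) = mm (E v v) gg"
proof (intro ext)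
  fix x y
  have "mm gg (EE v) x y = mm (EE x) (EE v) x y" by (simp add: mm_def gg_def)
  also have "\<dots> = (if x = v then EE v x y else 0)" by (simp add: EE_mult)
  also have "\<dots> = mm (E v v) gg x y" by (simp add: mm_E_left gg_def)
  finally show "mm gg (EE v) x y = mm (E v v) gg x y" .
qed

end

definition cj :: "('a::finite \<Rightarrow> 'a \<Rightarrow> 'k::field) \<Rightarrow> ('a \<Rightarrow> 'a \<Rightarrow> 'k) \<Rightarrow> ('a \<Rightarrow> 'a \<Rightarrow> 'k) \<Rightarrow> ('a \<Rightarrow> 'a \<Rightarrow> 'k)" where
  "cj g h f = mm (mm g f) h"

locale unitpair =
  fixes g h :: "'a::{finite,order} \<Rightarrow> 'a \<Rightarrow> 'k::field"
  assumes gi: "g \<in> incidence" and hi: "h \<in> incidence"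
    and gh: "mm g h = dl" and hg: "mm h g = dl"
begin

lemma hg_cancel: "mm h (mm g X) = X"
  by (simp add: mm_assoc[symmetric] hg mm_dl_left)

lemma gh_cancel: "mm g (mm h X) = X"
  by (simp add: mm_assoc[symmetric] gh mm_dl_left)

lemma cj_inc: "f \<in> incidence \<Longrightarrow> cj g h f \<in> incidence"
  unfolding cj_def using mm_inc gi hi by blast

lemma cj_lin: "inc_linear (cj g h)"
  unfolding inc_linear_def cj_def
  by (simp add: mm_add_left mm_add_right mm_smul_left[unfolded smul_def] mm_smul_right[unfolded smul_def])

lemma cj_mult: "cj g h (mm f f') = mm (cj g h f) (cj g h f')"
  unfolding cj_def by (simp add: mm_assoc hg_cancel)

lemma cj_cj: "cj h g (cj g h f) = f"
  unfolding cj_def by (simp add: mm_assoc hg_cancel hg mm_dl_right)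

lemma cj_cj': "cj g h (cj h g f) = f"
  unfolding cj_def by (simp add: mm_assoc gh_cancel gh mm_dl_right)

lemma cj_inc': "f \<in> incidence \<Longrightarrow> cj h g f \<in> incidence"
  unfolding cj_def using mm_inc gi hi by blast

lemma cj_bij: "bij_betw (cj g h) incidence incidence"
  by (rule bij_betw_byWitness[where f'="cj h g"]) (auto simp: cj_cj cj_cj' cj_inc cj_inc')

lemma cj_diff: "cj g h (\<lambda>x y. f x y - f' x y) = (\<lambda>x y. cj g h f x y - cj g h f' x y)"
  unfolding cj_def by (simp add: mm_diff_left mm_diff_right)

lemma cj_comm: "f \<in> incidence \<Longrightarrow> f' \<in> incidence \<Longrightarrow> cj g h (inc_comm f f') = inc_comm (cj g h f) (cj g h f')"
  by (simp add: inc_comm_mm cj_inc cj_diff cj_mult)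

lemma cj_central: "c \<in> inc_center \<Longrightarrow> cj g h c = c"
proof -
  assume c: "c \<in> inc_center"
  then have ci: "c \<in> incidence" and "inc_mult c g = inc_mult g c" using gi by (auto simp: inc_center_def)
  then have "mm c g = mm g c" using inc_mult_mm gi by metis
  then have "cj g h c = mm (mm c g) h" by (simp add: cj_def)
  also have "\<dots> = mm c (mm g h)" by (rule mm_assoc)
  finally have "cj g h c = mm c (mm g h)" .
  then show ?thesis by (simp add: gh mm_dl_right)
qed

lemma cj_central': "c \<in> inc_center \<Longrightarrow> cj h g c = c"
proof -
  assume c: "c \<in> inc_center"
  then have ci: "c \<in> incidence" and "inc_mult c h = inc_mult h c" using hi by (auto simp: inc_center_def)
  then have "mm c h = mm h c" using inc_mult_mm hi by metis
  then have "cj h g c = mm (mm c h) g" by (simp add: cj_def)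
  also have "\<dots> = mm c (mm h g)" by (rule mm_assoc)
  finally have "cj h g c = mm c (mm h g)" .
  then show ?thesis by (simp add: hg mm_dl_right)
qed

lemma lin_comp:
  assumes "inc_linear \<phi>" "\<And>f. f \<in> incidence \<Longrightarrow> \<phi> f \<in> incidence" "inc_linear \<psi>"
  shows "inc_linear (\<lambda>f. \<psi> (\<phi> f))"
  using assms unfolding inc_linear_def by simp

lemma lie_cj:
  assumes "lie_automorphism \<phi>"
  shows "lie_automorphism (\<lambda>f. cj g h (\<phi> f))"
proof -
  have "inc_linear (\<lambda>f. cj g h (\<phi> f))"
    by (rule lin_comp[OF lie_lin[OF assms] lie_inc[OF assms] cj_lin])
  moreover have "bij_betw (\<lambda>f. cj g h (\<phi> f)) incidence incidence"
    using bij_betw_trans[OF lie_bij[OF assms] cj_bij] by (simp add: comp_def)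
  moreover have "cj g h (\<phi> (inc_comm f f')) = inc_comm (cj g h (\<phi> f)) (cj g h (\<phi> f'))"
    if "f \<in> incidence" "f' \<in> incidence" for f f'
    using lie_comm[OF assms that] cj_comm[OF lie_inc[OF assms that(1)] lie_inc[OF assms that(2)]] by simp
  ultimately show ?thesis by (simp add: lie_automorphism_def inc_lin_bij_def)
qed

end

lemma unitpair_swap: "unitpair g h \<Longrightarrow> unitpair h g"
  by (simp add: unitpair_def)

context unitpair
begin

lemma linbij_cj':
  assumes "inc_lin_bij \<psi>"
  shows "inc_lin_bij (\<lambda>f. cj h g (\<psi> f))"
proof -
  interpret u: unitpair h g using unitpair_swap unitpair_axioms by blast
  have b: "bij_betw \<psi> incidence incidence" using assms by (simp add: inc_lin_bij_def)
  have "inc_linear (\<lambda>f. cj h g (\<psi> f))"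
    by (rule lin_comp) (use assms b bij_betwE u.cj_lin in \<open>auto simp: inc_lin_bij_def\<close>)
  moreover have "bij_betw (\<lambda>f. cj h g (\<psi> f)) incidence incidence"
    using bij_betw_trans[OF b u.cj_bij] by (simp add: comp_def)
  ultimately show ?thesis by (simp add: inc_lin_bij_def)
qed

lemma alg_cj':
  assumes "alg_automorphism \<psi>"
  shows "alg_automorphism (\<lambda>f. cj h g (\<psi> f))"
proof -
  interpret u: unitpair h g using unitpair_swap unitpair_axioms by blast
  have lb: "inc_lin_bij \<psi>" using assms by (simp add: alg_automorphism_def)
  have pi: "f \<in> incidence \<Longrightarrow> \<psi> f \<in> incidence" for f
    using lb bij_betwE by (auto simp: inc_lin_bij_def)
  have "cj h g (\<psi> (inc_mult f f')) = inc_mult (cj h g (\<psi> f)) (cj h g (\<psi> f'))"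
    if "f \<in> incidence" "f' \<in> incidence" for f f'
  proof -
    have "\<psi> (inc_mult f f') = inc_mult (\<psi> f) (\<psi> f')" using assms that by (simp add: alg_automorphism_def)
    then show ?thesis
      using inc_mult_mm[OF pi[OF that(1)] pi[OF that(2)]] inc_mult_mm[OF u.cj_inc[OF pi[OF that(1)]] u.cj_inc[OF pi[OF that(2)]]]
        u.cj_mult by simp
  qed
  then show ?thesis using linbij_cj'[OF lb] by (simp add: alg_automorphism_def)
qed

lemma anti_cj':
  assumes "alg_anti_automorphism \<psi>"
  shows "alg_anti_automorphism (\<lambda>f. cj h g (\<psi> f))"
proof -
  interpret u: unitpair h g using unitpair_swap unitpair_axioms by blast
  have lb: "inc_lin_bij \<psi>" using assms by (simp add: alg_anti_automorphism_def)
  have pi: "f \<in> incidence \<Longrightarrow> \<psi> f \<in> incidence" for f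
    using lb bij_betwE by (auto simp: inc_lin_bij_def)
  have "cj h g (\<psi> (inc_mult f f')) = inc_mult (cj h g (\<psi> f')) (cj h g (\<psi> f))"
    if "f \<in> incidence" "f' \<in> incidence" for f f'
  proof -
    have "\<psi> (inc_mult f f') = inc_mult (\<psi> f') (\<psi> f)" using assms that by (simp add: alg_anti_automorphism_def)
    then show ?thesis
      using inc_mult_mm[OF pi[OF that(2)] pi[OF that(1)]] inc_mult_mm[OF u.cj_inc[OF pi[OF that(2)]] u.cj_inc[OF pi[OF that(1)]]]
        u.cj_mult by simp
  qed
  then show ?thesis using linbij_cj'[OF lb] by (simp add: alg_anti_automorphism_def)
qed

lemma proper_transfer:
  assumes lie: "lie_automorphism \<Phi>"
    and pr: "proper_lie_automorphism (\<lambda>f. cj g h (\<Phi> f))"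
  shows "proper_lie_automorphism \<Phi>"
proof -
  interpret u: unitpair h g using unitpair_swap unitpair_axioms by blast
  obtain \<psi> \<nu> where ct: "central_trace \<nu>" and
    cs: "(alg_automorphism \<psi> \<and> (\<forall>f \<in> incidence. cj g h (\<Phi> f) = (\<lambda>x y. \<psi> f x y + \<nu> f x y))) \<or>
      (alg_anti_automorphism \<psi> \<and> (\<forall>f \<in> incidence. cj g h (\<Phi> f) = (\<lambda>x y. - \<psi> f x y + \<nu> f x y)))"
    using pr unfolding proper_lie_automorphism_def by blast
  have nc: "f \<in> incidence \<Longrightarrow> \<nu> f \<in> inc_center" for f using ct by (auto simp: central_trace_def)
  have ncj: "f \<in> incidence \<Longrightarrow> cj h g (\<nu> f) = \<nu> f" for f using cj_central' nc by blast
  have bk: "f \<in> incidence \<Longrightarrow> \<Phi> f = cj h g (cj g h (\<Phi> f))" for f by (simp add: cj_cj)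
  from cs show ?thesis
  proof
    assume a: "alg_automorphism \<psi> \<and> (\<forall>f \<in> incidence. cj g h (\<Phi> f) = (\<lambda>x y. \<psi> f x y + \<nu> f x y))"
    have "\<Phi> f = (\<lambda>x y. cj h g (\<psi> f) x y + \<nu> f x y)" if "f \<in> incidence" for f
    proof -
      have "\<Phi> f = cj h g (\<lambda>x y. \<psi> f x y + \<nu> f x y)" using bk[OF that] a that by simp
      also have "\<dots> = (\<lambda>x y. cj h g (\<psi> f) x y + cj h g (\<nu> f) x y)"
        by (simp add: cj_def mm_add_left mm_add_right)
      finally show ?thesis using ncj[OF that] by simp
    qed
    then show ?thesis unfolding proper_lie_automorphism_def using ct alg_cj'[of \<psi>] a by blast
  next
    assume a: "alg_anti_automorphism \<psi> \<and> (\<forall>f \<in> incidence. cj g h (\<Phi> f) = (\<lambda>x y. - \<psi> f x y + \<nu> f x y))"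
    have "\<Phi> f = (\<lambda>x y. - cj h g (\<psi> f) x y + \<nu> f x y)" if "f \<in> incidence" for f
    proof -
      have "\<Phi> f = cj h g (\<lambda>x y. - \<psi> f x y + \<nu> f x y)" using bk[OF that] a that by simp
      also have "\<dots> = cj h g (\<lambda>x y. \<nu> f x y - \<psi> f x y)" by (simp add: algebra_simps)
      also have "\<dots> = (\<lambda>x y. cj h g (\<nu> f) x y - cj h g (\<psi> f) x y)"
        by (rule u.cj_diff)
      finally show ?thesis using ncj[OF that] by simp
    qed
    then show ?thesis unfolding proper_lie_automorphism_def using ct anti_cj'[of \<psi>] a by blast
  qed
qed

end

lemma diagonalize:
  fixes \<phi> :: "('a::{finite,order} \<Rightarrow> 'a \<Rightarrow> 'k::field) \<Rightarrow> ('a \<Rightarrow> 'a \<Rightarrow> 'k)"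
  assumes lie: "lie_automorphism \<phi>"
  shows "\<exists>g h. unitpair g h \<and> (\<forall>x. cj g h (\<phi> (E x x)) \<in> DD)"
proof -
  let ?g = "gg \<phi>"
  obtain h where hi: "h \<in> incidence" and gh: "mm ?g h = dl" and hg: "mm h ?g = dl"
    using unit_exists[OF gg_inc[OF lie] gg_diag[OF lie]] by blast
  interpret u: unitpair ?g h using gg_inc[OF lie] hi gh hg by unfold_locales
  have cEE: "cj ?g h (EE \<phi> v) = E v v" for v
    unfolding cj_def gg_EE[OF lie] by (simp add: mm_assoc gh mm_dl_right)
  have "cj ?g h (\<phi> (E x x)) \<in> DD" for x
  proof -
    have "cj ?g h (\<phi> (E x x)) = cj ?g h (\<lambda>a b. \<Sum>u\<in>UNIV. smul (\<phi> (E x x) u u) (EE \<phi> u) a b)"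
      using EE_span[OF lie E_DD] by metis
    also have "\<dots> = (\<lambda>a b. \<Sum>u\<in>UNIV. smul (\<phi> (E x x) u u) (cj ?g h (EE \<phi> u)) a b)"
      unfolding cj_def by (simp add: mm_sum_left mm_sum_right mm_smul_left mm_smul_right)
    also have "\<dots> = (\<lambda>a b. \<Sum>u\<in>UNIV. smul (\<phi> (E x x) u u) (E u u) a b)"
      by (simp add: cEE)
    finally show ?thesis by (auto simp: DD_def smul_def E_def intro!: sum.neutral)
  qed
  then show ?thesis using u.unitpair_axioms by blast
qed

definition ind :: "'a \<Rightarrow> 'a \<Rightarrow> 'k::field" where
  "ind x w = (if w = x then 1 else 0)"

lemma ind_inj:
  fixes y z y' z' :: "'a::order"
  assumes "y < z" "y' < z'"
    and h: "\<And>w. ind y w - ind z w = (ind y' w - ind z' w :: 'k::field)"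
  shows "y = y' \<and> z = z'"
proof -
  have yz: "y \<noteq> z" "y' \<noteq> z'" using assms by auto
  have yy: "y = y'"
  proof (rule ccontr)
    assume ne: "y \<noteq> y'"
    have h1: "ind y' y - ind z' y = (1::'k)" using h[of y] yz by (simp add: ind_def)
    have "y = z'"
    proof (rule ccontr)
      assume "y \<noteq> z'" then show False using h1 ne by (simp add: ind_def)
    qed
    have h2: "ind y' z - ind z' z = (-1::'k)" using h[of z] yz by (simp add: ind_def)
    have "z = y'"
    proof (rule ccontr)
      assume "z \<noteq> y'" then show False using h2 \<open>y = z'\<close> yz by (simp add: ind_def)
    qed
    then show False using \<open>y = z'\<close> assms by simp
  qed
  moreover have "z = z'"
  proof (rule ccontr)
    assume ne: "z \<noteq> z'"
    have "ind y' z - ind z' z = (-1::'k)" using h[of z] yz by (simp add: ind_def)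
    then show False using ne yy yz by (simp add: ind_def)
  qed
  ultimately show ?thesis by simp
qed

lemma sum_ind: "(\<Sum>w\<in>UNIV. ind (u::'a::finite) w * f w) = (f u :: 'k::field)"
proof -
  have "(\<Sum>w\<in>UNIV. ind u w * f w) = (\<Sum>w\<in>UNIV. if w = u then f w else 0)"
    by (rule sum.cong) (simp_all add: ind_def)
  also have "\<dots> = f u" by (rule trans[OF sum.delta]) simp_all
  finally show ?thesis .
qed

lemma sum_pairs: "(\<Sum>x\<in>UNIV. \<Sum>y\<in>UNIV. F (x, y)) = (\<Sum>p\<in>(UNIV::('a::finite \<times> 'b::finite) set). F p)"
  by (simp add: sum.cartesian_product)

lemma E_JJ: "a < b \<Longrightarrow> E a b \<in> JJ"
  using E_inc[OF less_imp_le, of a b] by (auto simp: JJ_def E_def)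

lemma mm_DD_left: "d \<in> DD \<Longrightarrow> mm d P u v = d u u * P u v"
proof -
  assume d: "d \<in> DD"
  have "mm d P u v = (\<Sum>z\<in>{u}. d u z * P z v)"
    unfolding mm_def by (rule sum.mono_neutral_right) (use d in \<open>auto simp: DD_def\<close>)
  then show ?thesis by simp
qed

lemma mm_DD_right: "d \<in> DD \<Longrightarrow> mm P d u v = P u v * d v v"
proof -
  assume d: "d \<in> DD"
  have "mm P d u v = (\<Sum>z\<in>{v}. P u z * d z v)"
    unfolding mm_def by (rule sum.mono_neutral_right) (use d in \<open>auto simp: DD_def\<close>)
  then show ?thesis by simp
qed

lemma comm_E_diag:
  fixes x y z :: "'a::{finite,order}"
  assumes "y < z"
  shows "inc_comm (E x x) (E y z) = smul (ind y x - ind z x) (E y z :: 'a \<Rightarrow> 'a \<Rightarrow> 'k::field)"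
proof -
  have "inc_comm (E x x) (E y z) = (\<lambda>u v. mm (E x x) (E y z) u v - mm (E y z) (E x x) u v :: 'k)"
    by (rule inc_comm_mm) (use assms in \<open>auto intro: E_inc\<close>)
  also have "\<dots> = smul (ind y x - ind z x) (E y z)"
    unfolding mm_E_E using assms by (auto simp: smul_def ind_def E_def intro!: ext)
  finally show ?thesis .
qed

lemma comm_smul:
  fixes f g :: "'a::{finite,order} \<Rightarrow> 'a \<Rightarrow> 'k::field"
  assumes "f \<in> incidence" "g \<in> incidence"
  shows "inc_comm (smul c f) (smul d g) = smul (c * d) (inc_comm f g)"
proof -
  have "inc_comm (smul c f) (smul d g) = (\<lambda>x y. mm (smul c f) (smul d g) x y - mm (smul d g) (smul c f) x y)"
    by (rule inc_comm_mm[OF smul_inc[OF assms(1)] smul_inc[OF assms(2)]])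
  also have "\<dots> = smul (c * d) (inc_comm f g)"
    unfolding inc_comm_mm[OF assms] mm_smul_left mm_smul_right
    by (simp add: smul_def algebra_simps)
  finally show ?thesis .
qed

lemma comm_E_E:
  fixes a b c d :: "'a::{finite,order}"
  assumes "a \<le> b" "c \<le> d"
  shows "inc_comm (E a b) (E c d) = (\<lambda>x y. (if b = c then E a d x y else 0) - (if d = a then E c b x y else (0::'k::field)))"
  using assms by (simp add: inc_comm_mm E_inc mm_E_E)

context
  fixes \<phi> :: "('a::{finite,order} \<Rightarrow> 'a \<Rightarrow> 'k::field) \<Rightarrow> ('a \<Rightarrow> 'a \<Rightarrow> 'k)"
  assumes lie: "lie_automorphism \<phi>"
    and diagD: "\<And>x. \<phi> (E x x) \<in> DD"
begin

definition av :: "'a \<Rightarrow> 'a \<Rightarrow> 'k" where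
  "av x u = \<phi> (E x x) u u"

lemma diag_expand:
  assumes f: "f \<in> incidence"
  shows "\<phi> f w w = (\<Sum>x\<in>UNIV. f x x * av x w)"
proof -
  have "\<phi> f w w = (\<Sum>p\<in>UNIV. f (fst p) (snd p) * \<phi> (E (fst p) (snd p)) w w)"
    using lin_expand[OF lie_lin[OF lie] f] by simp
  also have "\<dots> = (\<Sum>x\<in>UNIV. \<Sum>y\<in>UNIV. f x y * \<phi> (E x y) w w)"
    using sum_pairs[where F="\<lambda>p. f (fst p) (snd p) * \<phi> (E (fst p) (snd p)) w w"] by simp
  also have "\<dots> = (\<Sum>x\<in>UNIV. \<Sum>y\<in>UNIV. if y = x then f x x * av x w else 0)"
  proof (intro sum.cong refl)
    fix x y :: 'a
    show "f x y * \<phi> (E x y) w w = (if y = x then f x x * av x w else 0)"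
    proof (cases "x < y")
      case True
      then have "\<phi> (E x y) \<in> JJ" using lie_J[OF lie E_JJ] by blast
      then show ?thesis using True by (auto simp: JJ_def)
    next
      case False
      then show ?thesis
        by (cases "y = x") (auto simp: av_def incD[OF f] order.order_iff_strict)
    qed
  qed
  also have "\<dots> = (\<Sum>x\<in>UNIV. f x x * av x w)" by simp
  finally show ?thesis .
qed

lemma row_indep:
  assumes "\<And>x. (\<Sum>w\<in>UNIV. c w * av x w) = 0"
  shows "c u = 0"
proof -
  define B where "B x = inv_into incidence \<phi> (E u u) x x" for x
  have eu: "E u u \<in> incidence" by (rule E_inc) simp
  have "E u u w w = (\<Sum>x\<in>UNIV. B x * av x w)" for w
  proof -
    have "E u u w w = \<phi> (inv_into incidence \<phi> (E u u)) w w" using L_Li[OF lie eu] by simp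
    also have "\<dots> = (\<Sum>x\<in>UNIV. B x * av x w)"
      unfolding B_def by (rule diag_expand[OF Li_inc[OF lie eu]])
    finally show ?thesis .
  qed
  moreover have "c u = (\<Sum>w\<in>UNIV. c w * E u u w w)"
    by (simp add: E_def mult_if1 cong: if_cong)
  ultimately have "c u = (\<Sum>w\<in>UNIV. c w * (\<Sum>x\<in>UNIV. B x * av x w))"
    by simp
  also have "\<dots> = (\<Sum>w\<in>UNIV. \<Sum>x\<in>UNIV. B x * (c w * av x w))"
    by (simp add: sum_distrib_left mult.left_commute)
  also have "\<dots> = (\<Sum>x\<in>UNIV. \<Sum>w\<in>UNIV. B x * (c w * av x w))"
    by (rule sum.swap)
  also have "\<dots> = (\<Sum>x\<in>UNIV. B x * (\<Sum>w\<in>UNIV. c w * av x w))"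
    by (simp add: sum_distrib_left)
  also have "\<dots> = 0" using assms by simp
  finally show ?thesis .
qed

lemma av_inj2:
  assumes "u < v" "u' < v'" "\<And>x. av x u - av x v = av x u' - av x v'"
  shows "u = u' \<and> v = v'"
proof (rule ind_inj[OF assms(1,2)])
  fix w
  define c where "c w = (ind u w - ind v w - (ind u' w - ind v' w) :: 'k)" for w :: 'a
  have "(\<Sum>w\<in>UNIV. c w * av x w) = 0" for x
  proof -
    have "(\<Sum>w\<in>UNIV. c w * av x w) = (av x u - av x v) - (av x u' - av x v')"
      unfolding c_def by (simp only: left_diff_distrib sum_subtractf sum_ind)
    then show ?thesis using assms(3) by simp
  qed
  then have "c w = 0" by (rule row_indep)
  then show "ind u w - ind v w = (ind u' w - ind v' w :: 'k)" by (simp add: c_def)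
qed

lemma av_inj:
  assumes "\<And>x. av x u = av x u'"
  shows "u = u'"
proof (rule ccontr)
  assume ne: "u \<noteq> u'"
  define c where "c w = (ind u w - ind u' w :: 'k)" for w :: 'a
  have "(\<Sum>w\<in>UNIV. c w * av x w) = 0" for x
  proof -
    have "(\<Sum>w\<in>UNIV. c w * av x w) = av x u - av x u'"
      unfolding c_def by (simp only: left_diff_distrib sum_subtractf sum_ind)
    then show ?thesis using assms by simp
  qed
  then have "c u = 0" by (rule row_indep)
  then show False using ne by (simp add: c_def ind_def)
qed

lemma eig:
  assumes "y < z"
  shows "(av x u - av x v) * \<phi> (E y z) u v = (ind y x - ind z x) * \<phi> (E y z) u v"
proof -
  have ex: "E x x \<in> incidence" and ez: "E y z \<in> incidence" using assms by (auto intro: E_inc)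
  have "\<phi> (inc_comm (E x x) (E y z)) = smul (ind y x - ind z x) (\<phi> (E y z))"
    by (simp only: comm_E_diag[OF assms] lin_smul[OF lie_lin[OF lie] ez])
  moreover have "\<phi> (inc_comm (E x x) (E y z)) = inc_comm (\<phi> (E x x)) (\<phi> (E y z))"
    by (rule lie_comm[OF lie ex ez])
  moreover have "inc_comm (\<phi> (E x x)) (\<phi> (E y z)) u v = (av x u - av x v) * \<phi> (E y z) u v"
    using inc_comm_mm[OF lie_inc[OF lie ex] lie_inc[OF lie ez]]
      mm_DD_left[OF diagD] mm_DD_right[OF diagD]
    by (simp add: av_def algebra_simps)
  ultimately show ?thesis by (simp add: smul_def) metis
qed

definition th :: "'a \<Rightarrow> 'a \<Rightarrow> 'a \<times> 'a" where
  "th y z = (SOME p. \<phi> (E y z) (fst p) (snd p) \<noteq> 0)"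

definition sg :: "'a \<Rightarrow> 'a \<Rightarrow> 'k" where
  "sg y z = \<phi> (E y z) (fst (th y z)) (snd (th y z))"

lemma th_props:
  assumes "y < z"
  shows "sg y z \<noteq> 0" "fst (th y z) < snd (th y z)"
    "\<And>x. av x (fst (th y z)) - av x (snd (th y z)) = ind y x - ind z x"
    "\<phi> (E y z) = smul (sg y z) (E (fst (th y z)) (snd (th y z)))"
proof -
  have ez: "E y z \<in> incidence" using assms by (auto intro: E_inc)
  have "E y z \<noteq> (\<lambda>x y. 0::'k)"
  proof
    assume "E y z = (\<lambda>x y. 0::'k)"
    then have "E y z y z = (0::'k)" by simp
    then show False by (simp add: E_def)
  qed
  then have "\<phi> (E y z) \<noteq> (\<lambda>x y. 0)" using lie_zero_iff[OF lie ez] by blast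
  then have "\<exists>p. \<phi> (E y z) (fst p) (snd p) \<noteq> 0"
  proof (rule contrapos_np)
    assume "\<not> (\<exists>p. \<phi> (E y z) (fst p) (snd p) \<noteq> 0)"
    then have "\<And>u v. \<phi> (E y z) u v = 0" by (metis fst_conv snd_conv)
    then show "\<phi> (E y z) = (\<lambda>x y. 0)" by (intro ext) simp
  qed
  then have nz: "\<phi> (E y z) (fst (th y z)) (snd (th y z)) \<noteq> 0"
    unfolding th_def by (rule someI_ex)
  then show s: "sg y z \<noteq> 0" by (simp add: sg_def)
  have PJ: "\<phi> (E y z) \<in> JJ" using lie_J[OF lie E_JJ[OF assms]] .
  then show lt: "fst (th y z) < snd (th y z)"
    using nz by (auto simp: JJ_def dest: incD' intro: order.not_eq_order_implies_strict)
  show w: "av x (fst (th y z)) - av x (snd (th y z)) = ind y x - ind z x" for x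
    using eig[OF assms, of x "fst (th y z)" "snd (th y z)"] nz by simp
  show "\<phi> (E y z) = smul (sg y z) (E (fst (th y z)) (snd (th y z)))"
  proof (intro ext)
    fix u v
    show "\<phi> (E y z) u v = smul (sg y z) (E (fst (th y z)) (snd (th y z))) u v"
    proof (cases "\<phi> (E y z) u v = 0")
      case True
      then show ?thesis
        by (auto simp: smul_def E_def sg_def)
    next
      case False
      then have uv: "u < v"
        using PJ by (auto simp: JJ_def dest: incD' intro: order.not_eq_order_implies_strict)
      have "av x u - av x v = ind y x - ind z x" for x
        using eig[OF assms, of x u v] False by simp
      then have "av x u - av x v = av x (fst (th y z)) - av x (snd (th y z))" for x
        using w by simp
      then have "u = fst (th y z) \<and> v = snd (th y z)"
        by (rule av_inj2[OF uv lt])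
      then show ?thesis by (auto simp: smul_def E_def sg_def)
    qed
  qed
qed

lemma th_inj:
  assumes "y < z" "y' < z'" "th y z = th y' z'"
  shows "y = y' \<and> z = z'"
proof (rule ind_inj[OF assms(1,2)])
  fix w
  show "ind y w - ind z w = (ind y' w - ind z' w :: 'k)"
  proof -
    have "ind y w - ind z w = av w (fst (th y z)) - av w (snd (th y z))"
      using th_props(3)[OF assms(1), of w] by simp
    also have "\<dots> = av w (fst (th y' z')) - av w (snd (th y' z'))" using assms(3) by simp
    also have "\<dots> = ind y' w - ind z' w" using th_props(3)[OF assms(2), of w] by simp
    finally show ?thesis .
  qed
qed

lemma th_surj:
  assumes "u < v"
  shows "\<exists>y z. y < z \<and> th y z = (u, v)"
proof -
  let ?S = "{p :: 'a \<times> 'a. fst p < snd p}"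
  let ?f = "\<lambda>p. th (fst p) (snd p)"
  have inj: "inj_on ?f ?S"
  proof (rule inj_onI)
    fix p q assume "p \<in> ?S" "q \<in> ?S" "?f p = ?f q"
    then have "fst p = fst q \<and> snd p = snd q" using th_inj[of "fst p" "snd p" "fst q" "snd q"] by simp
    then show "p = q" by (simp add: prod_eq_iff)
  qed
  have sub: "?f ` ?S \<subseteq> ?S"
  proof
    fix q assume "q \<in> ?f ` ?S"
    then obtain p where "p \<in> ?S" "q = ?f p" by blast
    then show "q \<in> ?S" using th_props(2)[of "fst p" "snd p"] by simp
  qed
  have fin: "finite ?S" by simp
  have eq: "?f ` ?S = ?S" by (rule endo_inj_surj[OF fin sub inj])
  have "(u, v) \<in> ?S" using assms by simp
  then have "(u, v) \<in> ?f ` ?S" by (simp only: eq)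
  then obtain p where "p \<in> ?S" "(u, v) = ?f p" by blast
  then show ?thesis by auto
qed

lemma R1:
  assumes "x < y" "y < z"
  shows "(snd (th x y) = fst (th y z) \<and> th x z = (fst (th x y), snd (th y z)) \<and> sg x z = sg x y * sg y z) \<or>
         (snd (th y z) = fst (th x y) \<and> th x z = (fst (th y z), snd (th x y)) \<and> sg x z = - (sg x y * sg y z))"
proof -
  obtain a1 b1 where t1: "th x y = (a1, b1)" by fastforce
  obtain a2 b2 where t2: "th y z = (a2, b2)" by fastforce
  obtain a3 b3 where t3: "th x z = (a3, b3)" by fastforce
  have xz: "x < z" using assms by simp
  note p1 = th_props[OF assms(1), unfolded t1 fst_conv snd_conv]
  note p2 = th_props[OF assms(2), unfolded t2 fst_conv snd_conv]
  note p3 = th_props[OF xz, unfolded t3 fst_conv snd_conv]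
  have exy: "E x y \<in> incidence" "E y z \<in> incidence" using assms by (auto intro: E_inc)
  have zx: "z \<noteq> x" using assms by auto
  have "inc_comm (E x y) (E y z) = (E x z :: 'a \<Rightarrow> 'a \<Rightarrow> 'k)"
    using comm_E_E[OF less_imp_le[OF assms(1)] less_imp_le[OF assms(2)]] zx by simp
  then have "\<phi> (E x z) = inc_comm (\<phi> (E x y)) (\<phi> (E y z))"
    using lie_comm[OF lie exy] by simp
  also have "\<dots> = inc_comm (smul (sg x y) (E a1 b1)) (smul (sg y z) (E a2 b2))"
    using p1(4) p2(4) by simp
  also have "\<dots> = smul (sg x y * sg y z) (inc_comm (E a1 b1) (E a2 b2))"
    by (rule comm_smul[OF E_inc E_inc]) (use p1(2) p2(2) in auto)
  finally have eq0: "\<phi> (E x z) = smul (sg x y * sg y z) (inc_comm (E a1 b1) (E a2 b2))" .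
  have eq: "smul (sg x z) (E a3 b3) = smul (sg x y * sg y z) (\<lambda>u v. (if b1 = a2 then E a1 b2 u v else 0) - (if b2 = a1 then E a2 b1 u v else 0))"
    using eq0 by (simp only: p3(4) comm_E_E[OF less_imp_le[OF p1(2)] less_imp_le[OF p2(2)]])
  have val: "sg x z * E a3 b3 u v = sg x y * sg y z * ((if b1 = a2 then E a1 b2 u v else 0) - (if b2 = a1 then E a2 b1 u v else 0))" for u v
    using fun_cong[OF fun_cong[OF eq, of u], of v] by (simp add: smul_def)
  have nz: "sg x y * sg y z \<noteq> 0" using p1(1) p2(1) by simp
  show ?thesis
  proof (cases "b1 = a2")
    case True
    then have "b2 \<noteq> a1" using p1(2) p2(2) by auto
    have "sg x z = sg x y * sg y z * E a1 b2 a3 b3" using val[of a3 b3] True \<open>b2 \<noteq> a1\<close> by (simp add: E_def)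
    then have a: "a3 = a1 \<and> b3 = b2" using p3(1) by (auto simp: E_def split: if_splits)
    then have "sg x z = sg x y * sg y z" using val[of a3 b3] True \<open>b2 \<noteq> a1\<close> by (simp add: E_def)
    then show ?thesis using True a t1 t2 t3 by simp
  next
    case False
    show ?thesis
    proof (cases "b2 = a1")
      case True
      have "sg x z = - (sg x y * sg y z * E a2 b1 a3 b3)" using val[of a3 b3] True False by (simp add: E_def)
      then have a: "a3 = a2 \<and> b3 = b1" using p3(1) by (auto simp: E_def split: if_splits)
      then have "sg x z = - (sg x y * sg y z)" using val[of a3 b3] True False by (simp add: E_def)
      then show ?thesis using True a t1 t2 t3 by simp
    next
      case False2: False
      have "sg x z = 0" using val[of a3 b3] False False2 by (simp add: E_def)
      then show ?thesis using p3(1) by simp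
    qed
  qed
qed

lemma R2:
  assumes "x < y" "z < w" "y \<noteq> z" "w \<noteq> x"
  shows "snd (th x y) \<noteq> fst (th z w)"
proof
  assume h: "snd (th x y) = fst (th z w)"
  obtain a1 b1 where t1: "th x y = (a1, b1)" by fastforce
  obtain a2 b2 where t2: "th z w = (a2, b2)" by fastforce
  note p1 = th_props[OF assms(1), unfolded t1 fst_conv snd_conv]
  note p2 = th_props[OF assms(2), unfolded t2 fst_conv snd_conv]
  have e: "E x y \<in> incidence" "E z w \<in> incidence" using assms by (auto intro: E_inc)
  have "inc_comm (E x y) (E z w) = (\<lambda>u v. 0 :: 'k)"
    using comm_E_E[OF less_imp_le[OF assms(1)] less_imp_le[OF assms(2)]] assms(3,4) by simp
  then have "(\<lambda>u v. 0) = inc_comm (\<phi> (E x y)) (\<phi> (E z w))"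
    using lie_comm[OF lie e] lin_zero[OF lie_lin[OF lie]] by simp
  also have "\<dots> = inc_comm (smul (sg x y) (E a1 b1)) (smul (sg z w) (E a2 b2))"
    using p1(4) p2(4) by simp
  also have "\<dots> = smul (sg x y * sg z w) (inc_comm (E a1 b1) (E a2 b2))"
    by (rule comm_smul[OF E_inc E_inc]) (use p1(2) p2(2) in auto)
  finally have eq0: "(\<lambda>u v. 0) = smul (sg x y * sg z w) (inc_comm (E a1 b1) (E a2 b2))" .
  have eq: "(\<lambda>u v. 0) = smul (sg x y * sg z w) (\<lambda>u v. (if b1 = a2 then E a1 b2 u v else 0) - (if b2 = a1 then E a2 b1 u v else 0))"
    using eq0 by (simp only: comm_E_E[OF less_imp_le[OF p1(2)] less_imp_le[OF p2(2)]])
  have b12: "b1 = a2" using h t1 t2 by simp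
  then have "b2 \<noteq> a1" using p1(2) p2(2) by auto
  have "0 = sg x y * sg z w * E a1 b2 a1 b2"
    using fun_cong[OF fun_cong[OF eq, of a1], of b2] b12 \<open>b2 \<noteq> a1\<close> by (simp add: smul_def E_def)
  then show False using p1(1) p2(1) by (simp add: E_def)
qed

end

definition nonext :: "'a::order \<Rightarrow> bool" where
  "nonext m \<longleftrightarrow> (\<exists>c. c < m) \<and> (\<exists>z. m < z)"

lemma nonext_iff: "(m \<notin> min_elems \<union> max_elems) \<longleftrightarrow> nonext m"
proof -
  have a: "m \<notin> min_elems \<longleftrightarrow> (\<exists>c. c < m)"
    unfolding min_elems_def by (auto simp: order.order_iff_strict)
  have b: "m \<notin> max_elems \<longleftrightarrow> (\<exists>z. m < z)"
    unfolding max_elems_def by (auto simp: order.order_iff_strict)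
  show ?thesis using a b by (simp add: nonext_def)
qed

lemma chain_extend:
  fixes S :: "'a::{finite,order} set"
  assumes "is_chain S"
  shows "\<exists>C. max_chain C \<and> S \<subseteq> C"
  using assms
proof (induction "card (UNIV::'a set) - card S" arbitrary: S rule: less_induct)
  case less
  show ?case
  proof (cases "max_chain S")
    case True
    then show ?thesis by blast
  next
    case False
    then obtain D where D: "is_chain D" "S \<subseteq> D" "D \<noteq> S" using less.prems by (auto simp: max_chain_def)
    then have "S \<subset> D" by blast
    then have "card S < card D" by (simp add: psubset_card_mono)
    moreover have "card D \<le> card (UNIV :: 'a set)" by (simp add: card_mono)
    ultimately have "card (UNIV::'a set) - card D < card (UNIV::'a set) - card S" by simp
    from less.hyps[OF this D(1)] obtain C where "max_chain C" "D \<subseteq> C" by blast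
    then show ?thesis using D(2) by blast
  qed
qed

lemma chain3: "c < m \<Longrightarrow> m < z \<Longrightarrow> is_chain {c, m, z}"
  by (auto simp: is_chain_def)

lemma chain_comp: "max_chain C \<Longrightarrow> a \<in> C \<Longrightarrow> b \<in> C \<Longrightarrow> a \<le> b \<or> b \<le> a"
  by (simp add: max_chain_def is_chain_def)

context
  fixes dummy :: "'a::{finite,order}"
  assumes single: "\<forall>C D :: 'a set. max_chain C \<and> max_chain D \<longrightarrow> chain_equiv C D"
begin

lemma comp_eq:
  fixes f :: "'a \<Rightarrow> 'b"
  assumes comp: "\<And>m m'. nonext m \<Longrightarrow> nonext m' \<Longrightarrow> m < m' \<Longrightarrow> f m = f m'"
    and "nonext a" "nonext b" "a \<le> b \<or> b \<le> a"
  shows "f a = f b"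
proof (cases "a = b")
  case False
  with assms(4) have "a < b \<or> b < a" by (auto simp: order.order_iff_strict)
  then show ?thesis using comp assms(2,3) by metis
qed simp

lemma G:
  fixes f :: "'a \<Rightarrow> 'b"
  assumes comp: "\<And>m m'. nonext m \<Longrightarrow> nonext m' \<Longrightarrow> m < m' \<Longrightarrow> f m = f m'"
    and nm: "nonext m" and nm': "nonext m'"
  shows "f m = f m'"
proof -
  obtain c z where cz: "c < m" "m < z" using nm by (auto simp: nonext_def)
  obtain C where C: "max_chain C" "{c, m, z} \<subseteq> C" using chain_extend[OF chain3[OF cz]] by blast
  obtain c' z' where cz': "c' < m'" "m' < z'" using nm' by (auto simp: nonext_def)
  obtain C' where C': "max_chain C'" "{c', m', z'} \<subseteq> C'" using chain_extend[OF chain3[OF cz']] by blast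
  have "chain_equiv C C'" using single C(1) C'(1) by blast
  then have rt: "(\<lambda>A B. max_chain A \<and> max_chain B \<and> (chains_linked A B \<or> chains_linked B A))\<^sup>*\<^sup>* C C'"
    by (simp add: chain_equiv_def)
  let ?P = "\<lambda>D. max_chain D \<and> (\<forall>n\<in>D. nonext n \<longrightarrow> f n = f m)"
  have "?P C'"
    using rt
  proof (induction rule: rtranclp_induct)
    case base
    have "\<forall>n\<in>C. nonext n \<longrightarrow> f n = f m"
    proof (intro ballI impI)
      fix n assume "n \<in> C" "nonext n"
      then show "f n = f m" using comp_eq[where f=f and a=n and b=m, OF comp] chain_comp[OF C(1), of n m] C(2) nm by auto
    qed
    then show ?case using C(1) by blast
  next
    case (step D D')
    then obtain x where x: "x \<in> D" "x \<in> D'" "nonext x"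
      using nonext_iff by (auto simp: chains_linked_def)
    have fx: "f x = f m" using step.IH x by blast
    have "\<forall>n\<in>D'. nonext n \<longrightarrow> f n = f m"
    proof (intro ballI impI)
      fix n assume "n \<in> D'" "nonext n"
      then show "f n = f m" using comp_eq[where f=f and a=n and b=x, OF comp] chain_comp[of D' n x] step.hyps(2) x fx by auto
    qed
    then show ?case using step.hyps(2) by blast
  qed
  then show ?thesis using C'(2) nm' by auto
qed

lemma chain_no_inner:
  fixes C D :: "'a set"
  assumes "max_chain C" "\<forall>x\<in>C. \<not> nonext x" "max_chain D"
  shows "D = C"
proof -
  have "chain_equiv C D" using single assms(1,3) by blast
  then have rt: "(\<lambda>A B. max_chain A \<and> max_chain B \<and> (chains_linked A B \<or> chains_linked B A))\<^sup>*\<^sup>* C D"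
    by (simp add: chain_equiv_def)
  then show ?thesis
  proof (cases rule: converse_rtranclpE)
    case base
    then show ?thesis by simp
  next
    case (step C1)
    then obtain x where "x \<in> C" "nonext x"
      using nonext_iff by (auto simp: chains_linked_def)
    then show ?thesis using assms(2) by blast
  qed
qed

end

lemma pair_maxchain:
  fixes x y :: "'a::order"
  assumes "x < y" "\<not> nonext x" "\<not> nonext y" "\<not> (\<exists>r. x < r \<and> r < y)"
  shows "max_chain {x, y}"
proof -
  have ch: "is_chain {x, y}" using assms(1) by (auto simp: is_chain_def)
  have sub: "D \<subseteq> {x, y}" if "is_chain D" "{x, y} \<subseteq> D" for D
  proof
    fix d assume d: "d \<in> D"
    have dx: "d \<le> x \<or> x \<le> d" and dy: "d \<le> y \<or> y \<le> d"
      using that d unfolding is_chain_def by blast+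
    show "d \<in> {x, y}"
    proof (rule ccontr)
      assume nd: "d \<notin> {x, y}"
      then have dnx: "d \<noteq> x" and dny: "d \<noteq> y" by auto
      have "d < x \<or> x < d" using dx dnx by (auto simp: order.order_iff_strict)
      moreover have "d < y \<or> y < d" using dy dny by (auto simp: order.order_iff_strict)
      ultimately show False
      proof (elim disjE)
        assume "d < x" "d < y" then show False using assms(1,2) by (auto simp: nonext_def)
      next
        assume "d < x" "y < d" then show False using assms(1) by simp
      next
        assume "x < d" "d < y" then show False using assms(4) by blast
      next
        assume "x < d" "y < d" then show False using assms(1,3) by (auto simp: nonext_def)
      qed
    qed
  qed
  show ?thesis unfolding max_chain_def
  proof (intro conjI allI impI ch)
    fix D assume "is_chain D \<and> {x, y} \<subseteq> D"
    then show "D = {x, y}" using sub by blast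
  qed
qed

lemma isolated:
  fixes p :: "'a::order"
  assumes conn: "poset_connected TYPE('a)" and iso: "\<And>q. \<not> (q < p \<or> p < q)"
  shows "q = p"
proof -
  have "(\<lambda>a b. a \<le> b \<or> b \<le> a)\<^sup>*\<^sup>* p q" using conn by (simp add: poset_connected_def)
  then show ?thesis
  proof (induction rule: rtranclp_induct)
    case base then show ?case by simp
  next
    case (step y z)
    have "y = p" using step.IH .
    show ?case
    proof (rule ccontr)
      assume "z \<noteq> p"
      then have "p < z \<or> z < p" using step.hyps(2) \<open>y = p\<close> by (auto simp: order.order_iff_strict)
      then show False using iso[of z] by blast
    qed
  qed
qed

lemma connected_const:
  fixes g :: "'a::order \<Rightarrow> 'b"
  assumes conn: "poset_connected TYPE('a)" and h: "\<And>x y. x < y \<Longrightarrow> g x = g y"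
  shows "g p = g q"
proof -
  have "(\<lambda>a b. a \<le> b \<or> b \<le> a)\<^sup>*\<^sup>* p q" using conn by (simp add: poset_connected_def)
  then show ?thesis
  proof (induction rule: rtranclp_induct)
    case base then show ?case by simp
  next
    case (step y z)
    have "g y = g z"
    proof (cases "y = z")
      case False
      then have "y < z \<or> z < y" using step.hyps(2) by (auto simp: order.order_iff_strict)
      then show ?thesis using h[of y z] h[of z y] by auto
    qed simp
    then show ?case using step.IH by simp
  qed
qed

locale comb =
  fixes T :: "'a::{finite,order} \<Rightarrow> 'a \<Rightarrow> 'a \<times> 'a" and av :: "'a \<Rightarrow> 'a \<Rightarrow> 'k::field"
  assumes conn: "poset_connected TYPE('a)"
    and single: "\<forall>C D :: 'a set. max_chain C \<and> max_chain D \<longrightarrow> chain_equiv C D"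
    and strict: "\<And>x y. x < y \<Longrightarrow> fst (T x y) < snd (T x y)"
    and R1: "\<And>x y z. x < y \<Longrightarrow> y < z \<Longrightarrow> (snd (T x y) = fst (T y z) \<and> T x z = (fst (T x y), snd (T y z))) \<or> (snd (T y z) = fst (T x y) \<and> T x z = (fst (T y z), snd (T x y)))"
    and R2: "\<And>x y z w. x < y \<Longrightarrow> z < w \<Longrightarrow> y \<noteq> z \<Longrightarrow> w \<noteq> x \<Longrightarrow> snd (T x y) \<noteq> fst (T z w)"
    and W: "\<And>x y w. x < y \<Longrightarrow> av w (fst (T x y)) - av w (snd (T x y)) = ind x w - ind y w"
    and ainj: "\<And>u u'. (\<And>w. av w u = av w u') \<Longrightarrow> u = u'"
begin

definition inc3 :: "'a \<Rightarrow> 'a \<Rightarrow> 'a \<Rightarrow> bool" where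
  "inc3 x y z \<longleftrightarrow> snd (T x y) = fst (T y z)"

lemma inc_T:
  assumes "x < y" "y < z" "inc3 x y z"
  shows "T x z = (fst (T x y), snd (T y z))"
proof -
  have "\<not> (snd (T y z) = fst (T x y))"
  proof
    assume h: "snd (T y z) = fst (T x y)"
    have "fst (T x y) < snd (T x y)" using strict[OF assms(1)] .
    also have "\<dots> = fst (T y z)" using assms(3) by (simp add: inc3_def)
    also have "\<dots> < snd (T y z)" using strict[OF assms(2)] .
    finally show False using h by simp
  qed
  then show ?thesis using R1[OF assms(1,2)] by blast
qed

lemma dec_T:
  assumes "x < y" "y < z" "\<not> inc3 x y z"
  shows "snd (T y z) = fst (T x y) \<and> T x z = (fst (T y z), snd (T x y))"
  using R1[OF assms(1,2)] assms(3) by (auto simp: inc3_def)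

lemma Lleft:
  assumes "x < y" "y < z" "y < z'" "inc3 x y z"
  shows "inc3 x y z'"
proof (rule ccontr)
  assume n: "\<not> inc3 x y z'"
  have a: "snd (T y z') = fst (T x y)" using dec_T[OF assms(1,3) n] by blast
  have b: "fst (T x z) = fst (T x y)" using inc_T[OF assms(1,2,4)] by simp
  have "x < z" "z' \<noteq> x" "z \<noteq> y" using assms by auto
  then have "snd (T y z') \<noteq> fst (T x z)" using R2[OF assms(3)] by blast
  then show False using a b by simp
qed

lemma Lright:
  assumes "x < y" "x' < y" "y < z" "inc3 x y z"
  shows "inc3 x' y z"
proof (rule ccontr)
  assume n: "\<not> inc3 x' y z"
  have a: "fst (T x' z) = fst (T y z)" using dec_T[OF assms(2,3) n] by simp
  have b: "snd (T x y) = fst (T y z)" using assms(4) by (simp add: inc3_def)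
  have "x' < z" "y \<noteq> x'" "z \<noteq> x" using assms by auto
  then have "snd (T x y) \<noteq> fst (T x' z)" using R2[OF assms(1)] by blast
  then show False using a b by simp
qed

lemma midtype:
  assumes "x < y" "x' < y" "y < z" "y < z'"
  shows "inc3 x y z = inc3 x' y z'"
proof
  assume "inc3 x y z"
  then have "inc3 x y z'" using Lleft[OF assms(1,3,4)] by blast
  then show "inc3 x' y z'" using Lright[OF assms(1,2,4)] by blast
next
  assume "inc3 x' y z'"
  then have "inc3 x' y z" using Lleft[OF assms(2,4,3)] by blast
  then show "inc3 x y z" using Lright[OF assms(2,1,3)] by blast
qed

lemma L4:
  assumes "x < y" "y < z" "z < w"
  shows "inc3 x y z = inc3 y z w"
proof -
  have xz: "x < z" using assms by simp
  have s1: "fst (T x y) < snd (T x y)" using strict[OF assms(1)] .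
  have s2: "fst (T y z) < snd (T y z)" using strict[OF assms(2)] .
  have s3: "fst (T z w) < snd (T z w)" using strict[OF assms(3)] .
  show ?thesis
  proof
    assume i: "inc3 x y z"
    show "inc3 y z w"
    proof (rule ccontr)
      assume n: "\<not> inc3 y z w"
      have t: "T x z = (fst (T x y), snd (T y z))" using inc_T[OF assms(1,2) i] .
      have d: "snd (T z w) = fst (T y z)" using dec_T[OF assms(2,3) n] by blast
      have i': "snd (T x y) = fst (T y z)" using i by (simp add: inc3_def)
      from R1[OF xz assms(3)] show False
      proof
        assume "snd (T x z) = fst (T z w) \<and> T x w = (fst (T x z), snd (T z w))"
        then have "snd (T y z) = fst (T z w)" using t by simp
        then show False using s2 s3 d by simp
      next
        assume "snd (T z w) = fst (T x z) \<and> T x w = (fst (T z w), snd (T x z))"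
        then have "fst (T y z) = fst (T x y)" using t d by simp
        then show False using s1 i' by simp
      qed
    qed
  next
    assume i: "inc3 y z w"
    show "inc3 x y z"
    proof (rule ccontr)
      assume n: "\<not> inc3 x y z"
      have d: "snd (T y z) = fst (T x y)" and t: "T x z = (fst (T y z), snd (T x y))"
        using dec_T[OF assms(1,2) n] by blast+
      have i': "snd (T y z) = fst (T z w)" using i by (simp add: inc3_def)
      from R1[OF xz assms(3)] show False
      proof
        assume "snd (T x z) = fst (T z w) \<and> T x w = (fst (T x z), snd (T z w))"
        then have "snd (T x y) = fst (T x y)" using t d i' by simp
        then show False using s1 by simp
      next
        assume "snd (T z w) = fst (T x z) \<and> T x w = (fst (T z w), snd (T x z))"
        then have "snd (T z w) = fst (T y z)" using t by simp
        then show False using s2 s3 i' by simp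
      qed
    qed
  qed
qed

definition MT :: "'a \<Rightarrow> bool" where
  "MT m = inc3 (SOME c. c < m) m (SOME z. m < z)"

lemma MT_eq:
  assumes "c < m" "m < z"
  shows "MT m = inc3 c m z"
proof -
  have "(SOME c. c < m) < m" using assms(1) by (rule someI)
  moreover have "m < (SOME z. m < z)" using assms(2) by (rule someI)
  ultimately show ?thesis unfolding MT_def using midtype assms by blast
qed

lemma global_type: "\<exists>b. \<forall>x y z. x < y \<longrightarrow> y < z \<longrightarrow> inc3 x y z = b"
proof (cases "\<exists>m0::'a. nonext m0")
  case True
  then obtain m0 :: 'a where m0: "nonext m0" by blast
  have comp: "MT m = MT m'" if "nonext m" "nonext m'" "m < m'" for m m'
  proof -
    from that(1) obtain c where c: "c < m" unfolding nonext_def by blast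
    from that(2) obtain z where z: "m' < z" unfolding nonext_def by blast
    have "MT m = inc3 c m m'" using MT_eq[OF c that(3)] .
    also have "\<dots> = inc3 m m' z" using L4[OF c that(3) z] .
    also have "\<dots> = MT m'" using MT_eq[OF that(3) z] by simp
    finally show ?thesis .
  qed
  have "\<forall>x y z. x < y \<longrightarrow> y < z \<longrightarrow> inc3 x y z = MT m0"
  proof (intro allI impI)
    fix x y z :: 'a assume xy: "x < y" and yz: "y < z"
    then have ny: "nonext y" by (auto simp: nonext_def)
    have "inc3 x y z = MT y" using MT_eq[OF xy yz] by simp
    also have "\<dots> = MT m0" using G[OF single comp ny m0] .
    finally show "inc3 x y z = MT m0" .
  qed
  then show ?thesis by blast
next
  case False
  then have "\<forall>x y z. x < y \<longrightarrow> y < z \<longrightarrow> inc3 x y z = True"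
    by (auto simp: nonext_def)
  then show ?thesis by blast
qed

end

locale comb2 = comb T av for T :: "'a::{finite,order} \<Rightarrow> 'a \<Rightarrow> 'a \<times> 'a" and av :: "'a \<Rightarrow> 'a \<Rightarrow> 'k::field" +
  fixes b :: bool and sgn :: "'k::field"
  assumes btype: "\<And>x y z. x < y \<Longrightarrow> y < z \<Longrightarrow> inc3 x y z = b"
    and sgn_def: "sgn = (if b then 1 else -1)"
begin

definition U1 :: "'a \<Rightarrow> 'a \<Rightarrow> 'a" where "U1 x y = (if b then fst (T x y) else snd (T x y))"
definition U2 :: "'a \<Rightarrow> 'a \<Rightarrow> 'a" where "U2 x y = (if b then snd (T x y) else fst (T x y))"

lemma sgn_nz: "sgn \<noteq> 0" by (simp add: sgn_def)

lemma C1: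
  assumes "x < y" "y < z"
  shows "U2 x y = U1 y z \<and> U1 x z = U1 x y \<and> U2 x z = U2 y z"
proof (cases b)
  case True
  then have i: "inc3 x y z" using btype[OF assms] by simp
  then show ?thesis using inc_T[OF assms i] True unfolding U1_def U2_def inc3_def by simp
next
  case False
  then have i: "\<not> inc3 x y z" using btype[OF assms] by simp
  then show ?thesis using dec_T[OF assms i] False unfolding U1_def U2_def by simp
qed

lemma C2:
  assumes "x < y"
  shows "av w (U1 x y) - av w (U2 x y) = sgn * (ind x w - ind y w)"
  using W[OF assms, of w] unfolding U1_def U2_def sgn_def by (cases b) (simp_all add: algebra_simps)

definition Lam :: "'a \<Rightarrow> 'a \<Rightarrow> 'a \<Rightarrow> 'k" where
  "Lam x y = (\<lambda>w. av w (U1 x y) - sgn * ind x w)"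

lemma Lam2: "x < y \<Longrightarrow> Lam x y = (\<lambda>w. av w (U2 x y) - sgn * ind y w)"
proof (rule ext)
  fix w assume xy: "x < y"
  have h: "av w (U1 x y) - av w (U2 x y) = sgn * (ind x w - ind y w)" using C2[OF xy] .
  show "Lam x y w = av w (U2 x y) - sgn * ind y w"
    unfolding Lam_def using h by (simp add: algebra_simps)
qed

lemma Lam_tri:
  assumes "x < y" "y < z"
  shows "Lam x y = Lam y z \<and> Lam x z = Lam x y"
proof -
  have c: "U2 x y = U1 y z" "U1 x z = U1 x y" using C1[OF assms] by auto
  have "Lam x y = (\<lambda>w. av w (U2 x y) - sgn * ind y w)" using Lam2[OF assms(1)] .
  also have "\<dots> = Lam y z" by (simp add: Lam_def c)
  finally show ?thesis by (simp add: Lam_def c)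
qed

definition Lm :: "'a \<Rightarrow> 'a \<Rightarrow> 'k" where
  "Lm m = Lam (SOME c. c < m) m"

lemma Lm_right:
  assumes "nonext m" "m < z"
  shows "Lam m z = Lm m"
proof -
  obtain c where "c < m" using assms(1) by (auto simp: nonext_def)
  then have c0: "(SOME c. c < m) < m" by (rule someI)
  show ?thesis unfolding Lm_def using Lam_tri[OF c0 assms(2)] by simp
qed

lemma Lm_left:
  assumes "nonext m" "c < m"
  shows "Lam c m = Lm m"
proof -
  obtain z where z: "m < z" using assms(1) by (auto simp: nonext_def)
  have "Lam c m = Lam m z" using Lam_tri[OF assms(2) z] by simp
  then show ?thesis using Lm_right[OF assms(1) z] by simp
qed

lemma Lam_const: "\<exists>L. \<forall>x y. x < y \<longrightarrow> Lam x y = L"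
proof (cases "\<exists>m0::'a. nonext m0")
  case True
  then obtain m0 :: 'a where m0: "nonext m0" by blast
  have comp: "Lm m = Lm m'" if "nonext m" "nonext m'" "m < m'" for m m'
    using Lm_right[OF that(1,3)] Lm_left[OF that(2,3)] by simp
  have Lc: "Lm m = Lm m0" if nm: "nonext m" for m
    by (rule G[where f=Lm, OF single comp nm m0])
  have "Lam x y = Lm m0" if xy: "x < y" for x y
  proof (cases "nonext x")
    case True
    then show ?thesis using Lm_right[OF True xy] Lc[OF True] by simp
  next
    case nx: False
    show ?thesis
    proof (cases "nonext y")
      case True
      then show ?thesis using Lm_left[OF True xy] Lc[OF True] by simp
    next
      case ny: False
      show ?thesis
      proof (cases "\<exists>r. x < r \<and> r < y")
        case True
        then obtain r where r: "x < r" "r < y" by blast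
        then have nr: "nonext r" by (auto simp: nonext_def)
        have "Lam x y = Lam x r" using Lam_tri[OF r] by simp
        then show ?thesis using Lm_right[OF nr r(2)] Lm_left[OF nr r(1)] Lc[OF nr] by simp
      next
        case False
        have mc: "max_chain {x, y}" using pair_maxchain[OF xy nx ny False] .
        obtain c z where cz: "c < m0" "m0 < z" using m0 by (auto simp: nonext_def)
        obtain C where C: "max_chain C" "{c, m0, z} \<subseteq> C" using chain_extend[OF chain3[OF cz]] by blast
        have "C = {x, y}" using chain_no_inner[OF single mc _ C(1)] nx ny by blast
        then have "m0 = x \<or> m0 = y" using C(2) by auto
        then show ?thesis using nx ny m0 by blast
      qed
    qed
  qed
  then show ?thesis by blast
next
  case False
  show ?thesis
  proof (cases "\<exists>x0 y0. x0 < (y0::'a)")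
    case True
    then obtain x0 y0 where p0: "x0 < (y0::'a)" by blast
    have mc0: "max_chain {x0, y0}"
      using pair_maxchain[OF p0] False by (auto simp: nonext_def)
    have "Lam x y = Lam x0 y0" if xy: "x < y" for x y
    proof -
      have "max_chain {x, y}" using pair_maxchain[OF xy] False by (auto simp: nonext_def)
      then have "{x, y} = {x0, y0}" using chain_no_inner[OF single mc0 _] False by blast
      then have "x = x0 \<and> y = y0" using xy p0 by (metis doubleton_eq_iff order.asym)
      then show ?thesis by simp
    qed
    then show ?thesis by blast
  next
    case False
    then show ?thesis by blast
  qed
qed

lemma pi_exists: "\<exists>\<pi>. inj \<pi> \<and> (\<forall>x y. x < y \<longrightarrow> U1 x y = \<pi> x \<and> U2 x y = \<pi> y)"
proof -
  obtain L where L: "\<And>x y. x < y \<Longrightarrow> Lam x y = L" using Lam_const by blast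
  have k1: "av w (U1 x y) = L w + sgn * ind x w" if "x < y" for x y w
    using fun_cong[OF L[OF that], of w] by (simp add: Lam_def algebra_simps)
  have k2: "av w (U2 x y) = L w + sgn * ind y w" if "x < y" for x y w
    using fun_cong[OF L[OF that], of w] Lam2[OF that] by (simp add: algebra_simps)
  define \<pi> where "\<pi> p = (if \<exists>q. p < q then U1 p (SOME q. p < q) else if \<exists>q. q < p then U2 (SOME q. q < p) p else p)" for p
  have p1: "U1 x y = \<pi> x" if "x < y" for x y
  proof -
    have ex: "\<exists>q. x < q" using that by blast
    have q0: "x < (SOME q. x < q)" using that by (rule someI)
    have "\<pi> x = U1 x (SOME q. x < q)" using ex by (simp add: \<pi>_def)
    moreover have "U1 x y = U1 x (SOME q. x < q)"
      by (rule ainj) (simp add: k1[OF that] k1[OF q0])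
    ultimately show ?thesis by simp
  qed
  have p2: "U2 x y = \<pi> y" if "x < y" for x y
  proof (cases "\<exists>q. y < q")
    case True
    have q0: "y < (SOME q. y < q)" using True by (metis someI)
    have "\<pi> y = U1 y (SOME q. y < q)" using True by (simp add: \<pi>_def)
    moreover have "U2 x y = U1 y (SOME q. y < q)"
      by (rule ainj) (simp add: k2[OF that] k1[OF q0])
    ultimately show ?thesis by simp
  next
    case False
    have ex: "\<exists>q. q < y" using that by blast
    have q0: "(SOME q. q < y) < y" using that by (rule someI)
    have "\<pi> y = U2 (SOME q. q < y) y" using False ex by (simp add: \<pi>_def)
    moreover have "U2 x y = U2 (SOME q. q < y) y"
      by (rule ainj) (simp add: k2[OF that] k2[OF q0])
    ultimately show ?thesis by simp
  qed
  have pav: "av w (\<pi> p) = L w + sgn * ind p w" if "\<exists>q. q < p \<or> p < q" for p w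
  proof -
    from that obtain q where "q < p \<or> p < q" by blast
    then show ?thesis
    proof
      assume "q < p" then show ?thesis using p2 k2 by metis
    next
      assume "p < q" then show ?thesis using p1 k1 by metis
    qed
  qed
  have "inj \<pi>"
  proof (rule injI, rule ccontr)
    fix p p' assume eq: "\<pi> p = \<pi> p'" and ne: "p \<noteq> p'"
    have np: "\<exists>q. q < p \<or> p < q"
    proof (rule ccontr)
      assume "\<not> (\<exists>q. q < p \<or> p < q)"
      then have "p' = p" using isolated[OF conn, of p p'] by blast
      then show False using ne by simp
    qed
    have np': "\<exists>q. q < p' \<or> p' < q"
    proof (rule ccontr)
      assume "\<not> (\<exists>q. q < p' \<or> p' < q)"
      then have "p = p'" using isolated[OF conn, of p' p] by blast
      then show False using ne by simp
    qed
    have "av p (\<pi> p) = av p (\<pi> p')" using eq by simp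
    then have "L p + sgn * ind p p = L p + sgn * ind p' p" using pav[OF np] pav[OF np'] by simp
    then show False using ne sgn_nz by (simp add: ind_def)
  qed
  then show ?thesis using p1 p2 by blast
qed

end

context comb
begin

lemma comb_main:
  "\<exists>\<pi>. inj \<pi> \<and> ((\<forall>x y. x < y \<longrightarrow> T x y = (\<pi> x, \<pi> y)) \<or> (\<forall>x y. x < y \<longrightarrow> T x y = (\<pi> y, \<pi> x)))"
proof -
  obtain b where b: "\<And>x y z. x < y \<Longrightarrow> y < z \<Longrightarrow> inc3 x y z = b" using global_type by blast
  interpret c2: comb2 T av b "if b then 1 else -1 :: 'k" by unfold_locales (simp_all add: b)
  obtain \<pi> where pi: "inj \<pi>" "\<And>x y. x < y \<Longrightarrow> c2.U1 x y = \<pi> x \<and> c2.U2 x y = \<pi> y"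
    using c2.pi_exists by blast
  show ?thesis
  proof (cases b)
    case True
    then have "T x y = (\<pi> x, \<pi> y)" if "x < y" for x y
      using pi(2)[OF that] True unfolding c2.U1_def c2.U2_def by (simp add: prod_eq_iff)
    then show ?thesis using pi(1) by blast
  next
    case False
    then have "T x y = (\<pi> y, \<pi> x)" if "x < y" for x y
      using pi(2)[OF that] False unfolding c2.U1_def c2.U2_def by (simp add: prod_eq_iff)
    then show ?thesis using pi(1) by blast
  qed
qed

end

locale isoc =
  fixes \<pi> :: "'a::{finite,order} \<Rightarrow> 'a" and \<sigma> :: "'a \<Rightarrow> 'a \<Rightarrow> 'k::field"
  assumes pinj: "inj \<pi>"
    and nz: "\<And>x y. \<sigma> x y \<noteq> 0"
    and coc: "\<And>x y z. x \<le> y \<Longrightarrow> y \<le> z \<Longrightarrow> \<sigma> x z = \<sigma> x y * \<sigma> y z"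
begin

lemma psurj: "surj \<pi>" using finite_UNIV_inj_surj[OF _ pinj] by simp
lemma pbij: "bij \<pi>" using pinj psurj by (simp add: bij_def)
lemma f_inv: "\<pi> (inv \<pi> u) = u" using surj_f_inv_f[OF psurj] .
lemma inv_f: "inv \<pi> (\<pi> x) = x" using inv_f_f[OF pinj] .
lemma inv_bij: "bij (inv \<pi>)" using bij_imp_bij_inv[OF pbij] .

lemma reidx: "(\<Sum>w\<in>UNIV. F (inv \<pi> w)) = (\<Sum>z\<in>UNIV. F z)"
  by (rule sum.reindex_bij_betw) (use inv_bij in \<open>simp add: bij_def\<close>)

lemma inv_eq_iff: "inv \<pi> u = x \<longleftrightarrow> u = \<pi> x"
  using f_inv inv_f by metis

definition psA :: "('a \<Rightarrow> 'a \<Rightarrow> 'k) \<Rightarrow> ('a \<Rightarrow> 'a \<Rightarrow> 'k)" where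
  "psA f = (\<lambda>u v. \<sigma> (inv \<pi> u) (inv \<pi> v) * f (inv \<pi> u) (inv \<pi> v))"

definition psD :: "('a \<Rightarrow> 'a \<Rightarrow> 'k) \<Rightarrow> ('a \<Rightarrow> 'a \<Rightarrow> 'k)" where
  "psD f = (\<lambda>u v. \<sigma> (inv \<pi> v) (inv \<pi> u) * f (inv \<pi> v) (inv \<pi> u))"

lemma psA_lin: "inc_linear psA"
  unfolding inc_linear_def psA_def by (simp add: algebra_simps)

lemma psD_lin: "inc_linear psD"
  unfolding inc_linear_def psD_def by (simp add: algebra_simps)

lemma psA_E: "psA (E x y) = smul (\<sigma> x y) (E (\<pi> x) (\<pi> y))"
  unfolding psA_def smul_def E_def by (intro ext) (auto simp: inv_eq_iff inv_f)

lemma psD_E: "psD (E x y) = smul (\<sigma> x y) (E (\<pi> y) (\<pi> x))"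
  unfolding psD_def smul_def E_def by (intro ext) (auto simp: inv_eq_iff inv_f)

end

locale isoA = isoc \<pi> \<sigma> for \<pi> :: "'a::{finite,order} \<Rightarrow> 'a" and \<sigma> :: "'a \<Rightarrow> 'a \<Rightarrow> 'k::field" +
  assumes ord: "\<And>x y. x \<le> y \<longleftrightarrow> \<pi> x \<le> \<pi> y"
begin

lemma ord_inv: "inv \<pi> u \<le> inv \<pi> v \<longleftrightarrow> u \<le> v"
  using ord[of "inv \<pi> u" "inv \<pi> v"] f_inv by simp

lemma psA_inc: "f \<in> incidence \<Longrightarrow> psA f \<in> incidence"
  unfolding inc_iff psA_def using ord_inv by (simp add: incD)

definition psA' :: "('a \<Rightarrow> 'a \<Rightarrow> 'k) \<Rightarrow> ('a \<Rightarrow> 'a \<Rightarrow> 'k)" where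
  "psA' h = (\<lambda>x y. h (\<pi> x) (\<pi> y) / \<sigma> x y)"

lemma psA'_inc: "h \<in> incidence \<Longrightarrow> psA' h \<in> incidence"
  unfolding inc_iff psA'_def using ord by (simp add: incD)

lemma psA_bij: "bij_betw psA incidence incidence"
proof (rule bij_betw_byWitness[where f'=psA'])
  show "\<forall>a\<in>incidence. psA' (psA a) = a"
    by (auto simp: psA'_def psA_def inv_f nz intro!: ext)
  show "\<forall>a'\<in>incidence. psA (psA' a') = a'"
    by (auto simp: psA'_def psA_def f_inv nz intro!: ext)
  show "psA ` incidence \<subseteq> incidence" using psA_inc by blast
  show "psA' ` incidence \<subseteq> incidence" using psA'_inc by blast
qed

lemma psA_mult:
  assumes f: "f \<in> incidence" and g: "g \<in> incidence"
  shows "psA (mm f g) = mm (psA f) (psA g)"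
proof (intro ext)
  fix u v
  let ?u = "inv \<pi> u" and ?v = "inv \<pi> v"
  have "mm (psA f) (psA g) u v = (\<Sum>w\<in>UNIV. \<sigma> ?u (inv \<pi> w) * f ?u (inv \<pi> w) * (\<sigma> (inv \<pi> w) ?v * g (inv \<pi> w) ?v))"
    by (simp add: mm_def psA_def)
  also have "\<dots> = (\<Sum>z\<in>UNIV. \<sigma> ?u z * f ?u z * (\<sigma> z ?v * g z ?v))"
    by (rule reidx)
  also have "\<dots> = (\<Sum>z\<in>UNIV. \<sigma> ?u ?v * (f ?u z * g z ?v))"
  proof (rule sum.cong[OF refl])
    fix z
    show "\<sigma> ?u z * f ?u z * (\<sigma> z ?v * g z ?v) = \<sigma> ?u ?v * (f ?u z * g z ?v)"
    proof (cases "?u \<le> z \<and> z \<le> ?v")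
      case True
      then show ?thesis using coc[of ?u z ?v] by (simp add: algebra_simps)
    next
      case False
      then show ?thesis using incD[OF f] incD[OF g] by auto
    qed
  qed
  also have "\<dots> = psA (mm f g) u v"
    by (simp add: psA_def mm_def sum_distrib_left)
  finally show "psA (mm f g) u v = mm (psA f) (psA g) u v" by simp
qed

lemma psA_auto: "alg_automorphism psA"
proof -
  have "psA (inc_mult f g) = inc_mult (psA f) (psA g)" if "f \<in> incidence" "g \<in> incidence" for f g
    using inc_mult_mm[OF that] inc_mult_mm[OF psA_inc[OF that(1)] psA_inc[OF that(2)]] psA_mult[OF that] by simp
  then show ?thesis unfolding alg_automorphism_def inc_lin_bij_def using psA_lin psA_bij by blast
qed

end

locale isoD = isoc \<pi> \<sigma> for \<pi> :: "'a::{finite,order} \<Rightarrow> 'a" and \<sigma> :: "'a \<Rightarrow> 'a \<Rightarrow> 'k::field" +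
  assumes ord: "\<And>x y. x \<le> y \<longleftrightarrow> \<pi> y \<le> \<pi> x"
begin

lemma ord_inv: "inv \<pi> v \<le> inv \<pi> u \<longleftrightarrow> u \<le> v"
  using ord[of "inv \<pi> v" "inv \<pi> u"] f_inv by simp

lemma psD_inc: "f \<in> incidence \<Longrightarrow> psD f \<in> incidence"
  unfolding inc_iff psD_def using ord_inv by (simp add: incD)

definition psD' :: "('a \<Rightarrow> 'a \<Rightarrow> 'k) \<Rightarrow> ('a \<Rightarrow> 'a \<Rightarrow> 'k)" where
  "psD' h = (\<lambda>x y. h (\<pi> y) (\<pi> x) / \<sigma> x y)"

lemma psD'_inc: "h \<in> incidence \<Longrightarrow> psD' h \<in> incidence"
  unfolding inc_iff psD'_def using ord by (simp add: incD)

lemma psD_bij: "bij_betw psD incidence incidence"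
proof (rule bij_betw_byWitness[where f'=psD'])
  show "\<forall>a\<in>incidence. psD' (psD a) = a"
    by (auto simp: psD'_def psD_def inv_f nz intro!: ext)
  show "\<forall>a'\<in>incidence. psD (psD' a') = a'"
    by (auto simp: psD'_def psD_def f_inv nz intro!: ext)
  show "psD ` incidence \<subseteq> incidence" using psD_inc by blast
  show "psD' ` incidence \<subseteq> incidence" using psD'_inc by blast
qed

lemma psD_mult:
  assumes f: "f \<in> incidence" and g: "g \<in> incidence"
  shows "psD (mm f g) = mm (psD g) (psD f)"
proof (intro ext)
  fix u v
  let ?u = "inv \<pi> u" and ?v = "inv \<pi> v"
  have "mm (psD g) (psD f) u v = (\<Sum>w\<in>UNIV. \<sigma> (inv \<pi> w) ?u * g (inv \<pi> w) ?u * (\<sigma> ?v (inv \<pi> w) * f ?v (inv \<pi> w)))"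
    by (simp add: mm_def psD_def)
  also have "\<dots> = (\<Sum>z\<in>UNIV. \<sigma> z ?u * g z ?u * (\<sigma> ?v z * f ?v z))"
    by (rule reidx)
  also have "\<dots> = (\<Sum>z\<in>UNIV. \<sigma> ?v ?u * (f ?v z * g z ?u))"
  proof (rule sum.cong[OF refl])
    fix z
    show "\<sigma> z ?u * g z ?u * (\<sigma> ?v z * f ?v z) = \<sigma> ?v ?u * (f ?v z * g z ?u)"
    proof (cases "?v \<le> z \<and> z \<le> ?u")
      case True
      then show ?thesis using coc[of ?v z ?u] by (simp add: algebra_simps)
    next
      case False
      then show ?thesis using incD[OF f] incD[OF g] by auto
    qed
  qed
  also have "\<dots> = psD (mm f g) u v"
    by (simp add: psD_def mm_def sum_distrib_left)
  finally show "psD (mm f g) u v = mm (psD g) (psD f) u v" by simp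
qed

lemma psD_anti: "alg_anti_automorphism psD"
proof -
  have "psD (inc_mult f g) = inc_mult (psD g) (psD f)" if "f \<in> incidence" "g \<in> incidence" for f g
    using inc_mult_mm[OF that] inc_mult_mm[OF psD_inc[OF that(2)] psD_inc[OF that(1)]] psD_mult[OF that] by simp
  then show ?thesis unfolding alg_anti_automorphism_def inc_lin_bij_def using psD_lin psD_bij by blast
qed

end

definition nuc :: "('a::finite \<Rightarrow> 'k::field) \<Rightarrow> ('a \<Rightarrow> 'a \<Rightarrow> 'k) \<Rightarrow> ('a \<Rightarrow> 'a \<Rightarrow> 'k)" where
  "nuc lam f = smul (\<Sum>w\<in>UNIV. lam w * f w w) dl"

lemma smul_dl_center:
  fixes c :: "'k::field"
  shows "smul c (dl :: 'a::{finite,order} \<Rightarrow> 'a \<Rightarrow> 'k) \<in> inc_center"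
proof -
  have i: "smul c (dl :: 'a \<Rightarrow> 'a \<Rightarrow> 'k) \<in> incidence" using smul_inc[OF dl_inc] .
  have "inc_mult (smul c dl) g = inc_mult g (smul c dl)" if "g \<in> incidence" for g :: "'a \<Rightarrow> 'a \<Rightarrow> 'k"
    using inc_mult_mm[OF i that] inc_mult_mm[OF that i]
    by (simp add: mm_smul_left mm_smul_right mm_dl_left mm_dl_right)
  then show ?thesis using i by (simp add: inc_center_def)
qed

lemma nuc_trace:
  "central_trace (nuc (lam :: 'a::{finite,order} \<Rightarrow> 'k::field))"
  unfolding central_trace_def
proof (intro conjI)
  show "inc_linear (nuc lam)"
    unfolding inc_linear_def nuc_def smul_def
    by (simp add: algebra_simps sum.distrib sum_distrib_left)
  show "nuc lam ` incidence \<subseteq> inc_center"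
    using smul_dl_center by (auto simp: nuc_def)
  show "\<forall>f\<in>incidence. \<forall>g\<in>incidence. nuc lam (inc_comm f g) = (\<lambda>x y. 0)"
    by (auto simp: nuc_def comm_diag0 smul_def)
qed

lemma nuc_E: "nuc lam (E x y) = (if x = y then smul (lam x) dl else (\<lambda>u v. 0))"
proof -
  have "(\<Sum>w\<in>UNIV. lam w * E x y w w) = (if x = y then lam x else 0)"
  proof (cases "x = y")
    case True
    then show ?thesis by (simp add: E_def mult_if1 cong: if_cong)
  next
    case False
    then have "\<And>w. lam w * E x y w w = 0" by (auto simp: E_def)
    then show ?thesis using False by (simp only: sum.neutral) simp
  qed
  then show ?thesis by (auto simp: nuc_def smul_def intro!: ext)
qed

lemma lin_pair:
  assumes "inc_linear A" "inc_linear B"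
  shows "inc_linear (\<lambda>f x y. c * A f x y + B f x y)"
  using assms unfolding inc_linear_def by (simp add: algebra_simps)

context
  fixes \<phi> :: "('a::{finite,order} \<Rightarrow> 'a \<Rightarrow> 'k::field) \<Rightarrow> ('a \<Rightarrow> 'a \<Rightarrow> 'k)"
  assumes lie: "lie_automorphism \<phi>"
    and diagD: "\<And>x. \<phi> (E x x) \<in> DD"
    and conn: "poset_connected TYPE('a)"
    and single: "\<forall>C D :: 'a set. max_chain C \<and> max_chain D \<longrightarrow> chain_equiv C D"
begin

lemma is_comb: "comb (th \<phi>) (av \<phi>)"
proof (unfold_locales)
  show "poset_connected TYPE('a)" by (rule conn)
  show "\<forall>C D :: 'a set. max_chain C \<and> max_chain D \<longrightarrow> chain_equiv C D" by (rule single)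
  show "\<And>x y. x < y \<Longrightarrow> fst (th \<phi> x y) < snd (th \<phi> x y)" using th_props(2)[OF lie diagD] .
  show "\<And>x y z. x < y \<Longrightarrow> y < z \<Longrightarrow> (snd (th \<phi> x y) = fst (th \<phi> y z) \<and> th \<phi> x z = (fst (th \<phi> x y), snd (th \<phi> y z))) \<or> (snd (th \<phi> y z) = fst (th \<phi> x y) \<and> th \<phi> x z = (fst (th \<phi> y z), snd (th \<phi> x y)))"
    using R1[OF lie diagD] by blast
  show "\<And>x y z w. x < y \<Longrightarrow> z < w \<Longrightarrow> y \<noteq> z \<Longrightarrow> w \<noteq> x \<Longrightarrow> snd (th \<phi> x y) \<noteq> fst (th \<phi> z w)"
    using R2[OF lie diagD] by blast
  show "\<And>x y w. x < y \<Longrightarrow> av \<phi> w (fst (th \<phi> x y)) - av \<phi> w (snd (th \<phi> x y)) = ind x w - ind y w"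
    using th_props(3)[OF lie diagD] by blast
  show "\<And>u u'. (\<And>w. av \<phi> w u = av \<phi> w u') \<Longrightarrow> u = u'"
    using av_inj[OF lie diagD] by blast
qed

lemma diagE: "\<phi> (E x x) u v = (if u = v then av \<phi> x u else 0)"
  using diagD[of x] by (auto simp: DD_def av_def[OF lie diagD])

lemma caseA:
  assumes pinj: "inj \<pi>" and T: "\<And>x y. x < y \<Longrightarrow> th \<phi> x y = (\<pi> x, \<pi> y)"
  shows "proper_lie_automorphism \<phi>"
proof -
  have ord: "x \<le> y \<longleftrightarrow> \<pi> x \<le> \<pi> y" for x y
  proof
    assume "x \<le> y"
    then show "\<pi> x \<le> \<pi> y"
      using th_props(2)[OF lie diagD, of x y] T[of x y] by (cases "x = y") (auto simp: order.order_iff_strict)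
  next
    assume h: "\<pi> x \<le> \<pi> y"
    show "x \<le> y"
    proof (cases "\<pi> x = \<pi> y")
      case True then show ?thesis using pinj by (simp add: inj_eq)
    next
      case False
      then have "\<pi> x < \<pi> y" using h by simp
      then obtain y' z' where yz: "y' < z'" "th \<phi> y' z' = (\<pi> x, \<pi> y)" using th_surj[OF lie diagD] by blast
      then have "\<pi> y' = \<pi> x" "\<pi> z' = \<pi> y" using T[OF yz(1)] by auto
      then have "y' = x" "z' = y" using pinj by (auto simp: inj_eq)
      then show ?thesis using yz(1) by simp
    qed
  qed
  define sh where "sh x y = (if x = y then 1 else if x < y then sg \<phi> x y else 1)" for x y
  have nz: "sh x y \<noteq> 0" for x y using th_props(1)[OF lie diagD] by (simp add: sh_def)
  have sgc: "sg \<phi> x z = sg \<phi> x y * sg \<phi> y z" if xy: "x < y" and yz: "y < z" for x y z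
  proof -
    have "z \<noteq> x" using xy yz by simp
    then have ne: "\<pi> z \<noteq> \<pi> x" using pinj by (simp add: inj_eq)
    have "\<not> (snd (th \<phi> y z) = fst (th \<phi> x y))" using T[OF xy] T[OF yz] ne by simp
    then show ?thesis using R1[OF lie diagD xy yz] by blast
  qed
  have coc: "sh x z = sh x y * sh y z" if "x \<le> y" "y \<le> z" for x y z
  proof (cases "x = y")
    case True then show ?thesis by (simp add: sh_def)
  next
    case False
    then have xy: "x < y" using that by simp
    show ?thesis
    proof (cases "y = z")
      case True then show ?thesis by (simp add: sh_def)
    next
      case False
      then have yz: "y < z" using that by simp
      have xz: "x < z" using xy yz by simp
      have n1: "x \<noteq> z" "x \<noteq> y" "y \<noteq> z" using xz xy yz by auto
      have e1: "sh x z = (sg \<phi> x z)" unfolding sh_def using xz n1 by simp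
      have e2: "sh x y = (sg \<phi> x y)" unfolding sh_def using xy n1 by simp
      have e3: "sh y z = (sg \<phi> y z)" unfolding sh_def using yz n1 by simp
      show ?thesis unfolding e1 e2 e3 using sgc[OF xy yz] by simp
    qed
  qed
  interpret ia: isoA \<pi> sh
  proof (unfold_locales)
    show "inj \<pi>" by (rule pinj)
    show "\<And>x y. sh x y \<noteq> 0" by (rule nz)
    show "\<And>x y z. x \<le> y \<Longrightarrow> y \<le> z \<Longrightarrow> sh x z = sh x y * sh y z" by (rule coc)
    show "\<And>x y. x \<le> y \<longleftrightarrow> \<pi> x \<le> \<pi> y" by (rule ord)
  qed
  have difw: "av \<phi> w (\<pi> x) - ind x w = av \<phi> w (\<pi> y) - ind y w" if "x < y" for x y w
    using th_props(3)[OF lie diagD that, of w] T[OF that] by (simp add: algebra_simps)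
  define lam where "lam w = av \<phi> w (\<pi> w) - 1" for w
  have avf: "av \<phi> w (\<pi> p) = lam w + ind p w" for w p
  proof -
    have "av \<phi> w (\<pi> p) - ind p w = av \<phi> w (\<pi> w) - ind w w"
      by (rule connected_const[OF conn, where g="\<lambda>p. av \<phi> w (\<pi> p) - ind p w"]) (rule difw)
    then show ?thesis by (simp add: lam_def ind_def algebra_simps)
  qed
  have eqE: "\<phi> (E x y) = (\<lambda>u v. 1 * ia.psA (E x y) u v + nuc lam (E x y) u v)" if "x \<le> y" for x y
  proof (cases "x = y")
    case True
    show ?thesis
    proof (intro ext)
      fix u v
      obtain p where p: "u = \<pi> p" using ia.psurj by (metis surj_def)
      have L: "\<phi> (E x y) u v = (if u = v then lam x + ind p x else 0)"
        using diagE[of x u v] avf[of x p] True p by (cases "u = v") auto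
      have R: "1 * ia.psA (E x y) u v + nuc lam (E x y) u v = (if u = \<pi> x \<and> v = \<pi> x then 1 else 0) + (if u = v then lam x else 0)"
        unfolding ia.psA_E nuc_E using True by (simp add: smul_def E_def dl_def sh_def)
      have "(\<pi> p = \<pi> x) = (p = x)" using pinj by (simp add: inj_eq)
      then show "\<phi> (E x y) u v = 1 * ia.psA (E x y) u v + nuc lam (E x y) u v"
        unfolding L R by (auto simp: ind_def p)
    qed
  next
    case False
    then have xy: "x < y" using that by simp
    show ?thesis
      using th_props(4)[OF lie diagD xy] T[OF xy] False xy unfolding ia.psA_E nuc_E
      by (auto simp: smul_def sh_def intro!: ext)
  qed
  have nl: "inc_linear (nuc lam)" using nuc_trace[of lam] by (simp add: central_trace_def)
  have eqf: "\<phi> f = (\<lambda>u v. 1 * ia.psA f u v + nuc lam f u v)" if "f \<in> incidence" for f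
    by (rule lin_ext[OF lie_lin[OF lie] lin_pair[OF ia.psA_lin nl] eqE that])
  have "alg_automorphism ia.psA \<and> (\<forall>f\<in>incidence. \<phi> f = (\<lambda>x y. ia.psA f x y + nuc lam f x y))"
    using ia.psA_auto eqf by simp
  then show ?thesis unfolding proper_lie_automorphism_def using nuc_trace[of lam] by blast
qed

lemma caseD:
  assumes pinj: "inj \<pi>" and T: "\<And>x y. x < y \<Longrightarrow> th \<phi> x y = (\<pi> y, \<pi> x)"
  shows "proper_lie_automorphism \<phi>"
proof -
  have ord: "x \<le> y \<longleftrightarrow> \<pi> y \<le> \<pi> x" for x y
  proof
    assume "x \<le> y"
    then show "\<pi> y \<le> \<pi> x"
      using th_props(2)[OF lie diagD, of x y] T[of x y] by (cases "x = y") (auto simp: order.order_iff_strict)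
  next
    assume h: "\<pi> y \<le> \<pi> x"
    show "x \<le> y"
    proof (cases "\<pi> x = \<pi> y")
      case True then show ?thesis using pinj by (simp add: inj_eq)
    next
      case False
      then have "\<pi> y < \<pi> x" using h by simp
      then obtain y' z' where yz: "y' < z'" "th \<phi> y' z' = (\<pi> y, \<pi> x)" using th_surj[OF lie diagD] by blast
      then have "\<pi> z' = \<pi> y" "\<pi> y' = \<pi> x" using T[OF yz(1)] by auto
      then have "y' = x" "z' = y" using pinj by (auto simp: inj_eq)
      then show ?thesis using yz(1) by simp
    qed
  qed
  define sh where "sh x y = (if x = y then 1 else if x < y then - sg \<phi> x y else 1)" for x y
  have nz: "sh x y \<noteq> 0" for x y using th_props(1)[OF lie diagD] by (simp add: sh_def)
  have sgc: "sg \<phi> x z = - (sg \<phi> x y * sg \<phi> y z)" if xy: "x < y" and yz: "y < z" for x y z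
  proof -
    have "z \<noteq> x" using xy yz by simp
    then have ne: "\<pi> z \<noteq> \<pi> x" using pinj by (simp add: inj_eq)
    have "\<not> (snd (th \<phi> x y) = fst (th \<phi> y z))" using T[OF xy] T[OF yz] ne by auto
    then show ?thesis using R1[OF lie diagD xy yz] by blast
  qed
  have coc: "sh x z = sh x y * sh y z" if "x \<le> y" "y \<le> z" for x y z
  proof (cases "x = y")
    case True then show ?thesis by (simp add: sh_def)
  next
    case False
    then have xy: "x < y" using that by simp
    show ?thesis
    proof (cases "y = z")
      case True then show ?thesis by (simp add: sh_def)
    next
      case False
      then have yz: "y < z" using that by simp
      have xz: "x < z" using xy yz by simp
      have n1: "x \<noteq> z" "x \<noteq> y" "y \<noteq> z" using xz xy yz by auto
      have e1: "sh x z = - (sg \<phi> x z)" unfolding sh_def using xz n1 by simp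
      have e2: "sh x y = - (sg \<phi> x y)" unfolding sh_def using xy n1 by simp
      have e3: "sh y z = - (sg \<phi> y z)" unfolding sh_def using yz n1 by simp
      show ?thesis unfolding e1 e2 e3 using sgc[OF xy yz] by simp
    qed
  qed
  interpret id: isoD \<pi> sh
  proof (unfold_locales)
    show "inj \<pi>" by (rule pinj)
    show "\<And>x y. sh x y \<noteq> 0" by (rule nz)
    show "\<And>x y z. x \<le> y \<Longrightarrow> y \<le> z \<Longrightarrow> sh x z = sh x y * sh y z" by (rule coc)
    show "\<And>x y. x \<le> y \<longleftrightarrow> \<pi> y \<le> \<pi> x" by (rule ord)
  qed
  have difw: "av \<phi> w (\<pi> x) + ind x w = av \<phi> w (\<pi> y) + ind y w" if "x < y" for x y w
    using th_props(3)[OF lie diagD that, of w] T[OF that] by (simp add: algebra_simps)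
  define lam where "lam w = av \<phi> w (\<pi> w) + 1" for w
  have avf: "av \<phi> w (\<pi> p) = lam w - ind p w" for w p
  proof -
    have "av \<phi> w (\<pi> p) + ind p w = av \<phi> w (\<pi> w) + ind w w"
      by (rule connected_const[OF conn, where g="\<lambda>p. av \<phi> w (\<pi> p) + ind p w"]) (rule difw)
    then show ?thesis by (simp add: lam_def ind_def algebra_simps)
  qed
  have eqE: "\<phi> (E x y) = (\<lambda>u v. (-1) * id.psD (E x y) u v + nuc lam (E x y) u v)" if "x \<le> y" for x y
  proof (cases "x = y")
    case True
    show ?thesis
    proof (intro ext)
      fix u v
      obtain p where p: "u = \<pi> p" using id.psurj by (metis surj_def)
      have L: "\<phi> (E x y) u v = (if u = v then lam x - ind p x else 0)"
        using diagE[of x u v] avf[of x p] True p by (cases "u = v") auto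
      have R: "(-1) * id.psD (E x y) u v + nuc lam (E x y) u v = - (if u = \<pi> x \<and> v = \<pi> x then 1 else 0) + (if u = v then lam x else 0)"
        unfolding id.psD_E nuc_E using True by (simp add: smul_def E_def dl_def sh_def)
      have "(\<pi> p = \<pi> x) = (p = x)" using pinj by (simp add: inj_eq)
      then show "\<phi> (E x y) u v = (-1) * id.psD (E x y) u v + nuc lam (E x y) u v"
        unfolding L R by (auto simp: ind_def p)
    qed
  next
    case False
    then have xy: "x < y" using that by simp
    show ?thesis
      using th_props(4)[OF lie diagD xy] T[OF xy] False xy unfolding id.psD_E nuc_E
      by (auto simp: smul_def sh_def intro!: ext)
  qed
  have nl: "inc_linear (nuc lam)" using nuc_trace[of lam] by (simp add: central_trace_def)
  have eqf: "\<phi> f = (\<lambda>u v. (-1) * id.psD f u v + nuc lam f u v)" if "f \<in> incidence" for f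
    by (rule lin_ext[OF lie_lin[OF lie] lin_pair[OF id.psD_lin nl] eqE that])
  have "alg_anti_automorphism id.psD \<and> (\<forall>f\<in>incidence. \<phi> f = (\<lambda>x y. - id.psD f x y + nuc lam f x y))"
    using id.psD_anti eqf by simp
  then show ?thesis unfolding proper_lie_automorphism_def using nuc_trace[of lam] by blast
qed

lemma diag_thm: "proper_lie_automorphism \<phi>"
proof -
  obtain \<pi> where pinj: "inj \<pi>" and cs: "(\<forall>x y. x < y \<longrightarrow> th \<phi> x y = (\<pi> x, \<pi> y)) \<or> (\<forall>x y. x < y \<longrightarrow> th \<phi> x y = (\<pi> y, \<pi> x))"
    using comb.comb_main[OF is_comb] by blast
  from cs show ?thesis
  proof
    assume "\<forall>x y. x < y \<longrightarrow> th \<phi> x y = (\<pi> x, \<pi> y)"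
    then show ?thesis using caseA[OF pinj] by blast
  next
    assume "\<forall>x y. x < y \<longrightarrow> th \<phi> x y = (\<pi> y, \<pi> x)"
    then show ?thesis using caseD[OF pinj] by blast
  qed
qed

end

theorem corollary3p12:
  fixes \<Phi> :: "('a::{finite,order} \<Rightarrow> 'a \<Rightarrow> 'k::field) \<Rightarrow> ('a \<Rightarrow> 'a \<Rightarrow> 'k)"
  assumes "poset_connected TYPE('a)"
    and "\<forall>C D :: 'a set. max_chain C \<and> max_chain D \<longrightarrow> chain_equiv C D"
    and "lie_automorphism \<Phi>"
  shows "proper_lie_automorphism \<Phi>"
proof -
  obtain g h where up: "unitpair g h" and dg: "\<forall>x. cj g h (\<Phi> (E x x)) \<in> DD"
    using diagonalize[OF assms(3)] by blast
  interpret u: unitpair g h using up .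
  have lie': "lie_automorphism (\<lambda>f. cj g h (\<Phi> f))" using u.lie_cj[OF assms(3)] .
  have "proper_lie_automorphism (\<lambda>f. cj g h (\<Phi> f))"
    by (rule diag_thm[OF lie' _ assms(1,2)]) (use dg in blast)
  then show ?thesis using u.proper_transfer[OF assms(3)] by blast
qed

end
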